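(* Let $A$ and $B$ be $\Bbbk$-algebras. Then there are isomorphisms of $\Bbbk$-vector spaces (1) $\mathcal{E}_{A\times B}\cong\mathcal{E}_A\times\mathcal{E}_B$; in particular $\operatorname{Frobdim}(A\times B)=\operatorname{Frobdim}(A)+\operatorname{Frobdim}(B)$; (2) $\mathcal{E}_{A\otimes B}\cong\mathcal{E}_A\otimes\mathcal{E}_B$; therefore $\operatorname{Frobdim}(A\otimes B)=\operatorname{Frobdim}(A)\cdot\operatorname{Frobdim}(B)$.
   Context: Algebras are associative and unital over a field $\Bbbk$; tensor products are over $\Bbbk$; $A\times B$ is the product algebra with componentwise operations and $A\otimes B$ the tensor product algebra. A nearly Frobenius coproduct on an algebra $A$ is a $\Bbbk$-linear map $\Delta:A\to A\otimes A$ that is an $A$-bimodule morphism, i.e. $\Delta(ab)=(a\otimes 1)\Delta(b)=\Delta(a)(1\otimes b)$ for all $a,b\in A$. The Frobenius space $\mathcal{E}_A$ is the vector space of all nearly Frobenius coproducts on $A$, and $\operatorname{Frobdim}A=\dim_\Bbbk\mathcal{E}_A$. *)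

theory Defs
  imports Main "HOL-Library.Function_Algebras" "HOL-Library.Product_Plus"
    "HOL-Library.Extended_Nat"
begin

text \<open>Vector spaces over a field 'k are abelian-group types 'v together with a scalar
  multiplication s :: 'k => 'v => 'v (HOL's vector_space locale).  Subspaces are sets.\<close>

definition lin_on ::
  "('k::field \<Rightarrow> 'v::ab_group_add \<Rightarrow> 'v) \<Rightarrow> 'v set \<Rightarrow> ('k \<Rightarrow> 'w::ab_group_add \<Rightarrow> 'w) \<Rightarrow> ('v \<Rightarrow> 'w) \<Rightarrow> bool"
  where "lin_on s1 S s2 f \<longleftrightarrow>
    (\<forall>x\<in>S. \<forall>y\<in>S. f (x + y) = f x + f y) \<and> (\<forall>c. \<forall>x\<in>S. f (s1 c x) = s2 c (f x))"

definition bilin_on ::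
  "('k::field \<Rightarrow> 'u::ab_group_add \<Rightarrow> 'u) \<Rightarrow> 'u set \<Rightarrow> ('k \<Rightarrow> 'v::ab_group_add \<Rightarrow> 'v) \<Rightarrow> 'v set
    \<Rightarrow> ('k \<Rightarrow> 'w::ab_group_add \<Rightarrow> 'w) \<Rightarrow> ('u \<Rightarrow> 'v \<Rightarrow> 'w) \<Rightarrow> bool"
  where "bilin_on s1 S1 s2 S2 s3 f \<longleftrightarrow>
    (\<forall>y\<in>S2. lin_on s1 S1 s3 (\<lambda>x. f x y)) \<and> (\<forall>x\<in>S1. lin_on s2 S2 s3 (f x))"

text \<open>Tensor product (of subspaces S1, S2) realized by the subspace S3 and the bilinear map
  tens: S3 is spanned by the pure tensors, and every bilinear map S1 x S2 -> k factors
  through a linear map S3 -> k.  (This is the universal property; testing it against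
  scalar-valued bilinear maps plus generation by pure tensors is equivalent to the full
  universal property, since linear functionals separate points.)\<close>

definition is_tensor_on ::
  "('k::field \<Rightarrow> 'u::ab_group_add \<Rightarrow> 'u) \<Rightarrow> 'u set \<Rightarrow> ('k \<Rightarrow> 'v::ab_group_add \<Rightarrow> 'v) \<Rightarrow> 'v set
    \<Rightarrow> ('k \<Rightarrow> 'w::ab_group_add \<Rightarrow> 'w) \<Rightarrow> 'w set \<Rightarrow> ('u \<Rightarrow> 'v \<Rightarrow> 'w) \<Rightarrow> bool"
  where "is_tensor_on s1 S1 s2 S2 s3 S3 tens \<longleftrightarrow>
    (\<forall>x\<in>S1. \<forall>y\<in>S2. tens x y \<in> S3) \<and>
    bilin_on s1 S1 s2 S2 s3 tens \<and>
    module.span s3 {tens x y | x y. x \<in> S1 \<and> y \<in> S2} = S3 \<and>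
    (\<forall>\<beta>. bilin_on s1 S1 s2 S2 (*) \<beta> \<longrightarrow>
       (\<exists>h. lin_on s3 S3 (*) h \<and> (\<forall>x\<in>S1. \<forall>y\<in>S2. h (tens x y) = \<beta> x y)))"

definition is_tensor ::
  "('k::field \<Rightarrow> 'u::ab_group_add \<Rightarrow> 'u) \<Rightarrow> ('k \<Rightarrow> 'v::ab_group_add \<Rightarrow> 'v)
    \<Rightarrow> ('k \<Rightarrow> 'w::ab_group_add \<Rightarrow> 'w) \<Rightarrow> ('u \<Rightarrow> 'v \<Rightarrow> 'w) \<Rightarrow> bool"
  where "is_tensor s1 s2 s3 tens \<longleftrightarrow> vector_space s1 \<and> vector_space s2 \<and> vector_space s3 \<and>
    is_tensor_on s1 UNIV s2 UNIV s3 UNIV tens"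

definition kalg :: "('k::field \<Rightarrow> 'a::ab_group_add \<Rightarrow> 'a) \<Rightarrow> ('a \<Rightarrow> 'a \<Rightarrow> 'a) \<Rightarrow> 'a \<Rightarrow> bool"
  where "kalg s m u \<longleftrightarrow> vector_space s \<and> bilin_on s UNIV s UNIV s m \<and>
    (\<forall>x y z. m (m x y) z = m x (m y z)) \<and> (\<forall>x. m u x = x \<and> m x u = x)"

definition prod_scale :: "('k \<Rightarrow> 'a \<Rightarrow> 'a) \<Rightarrow> ('k \<Rightarrow> 'b \<Rightarrow> 'b) \<Rightarrow> 'k \<Rightarrow> 'a \<times> 'b \<Rightarrow> 'a \<times> 'b"
  where "prod_scale sA sB c p = (sA c (fst p), sB c (snd p))"

definition prod_mult :: "('a \<Rightarrow> 'a \<Rightarrow> 'a) \<Rightarrow> ('b \<Rightarrow> 'b \<Rightarrow> 'b) \<Rightarrow> 'a \<times> 'b \<Rightarrow> 'a \<times> 'b \<Rightarrow> 'a \<times> 'b"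
  where "prod_mult mA mB p q = (mA (fst p) (fst q), mB (snd p) (snd q))"

definition tensor_alg ::
  "('k::field \<Rightarrow> 'a::ab_group_add \<Rightarrow> 'a) \<Rightarrow> ('a \<Rightarrow> 'a \<Rightarrow> 'a) \<Rightarrow> 'a
   \<Rightarrow> ('k \<Rightarrow> 'b::ab_group_add \<Rightarrow> 'b) \<Rightarrow> ('b \<Rightarrow> 'b \<Rightarrow> 'b) \<Rightarrow> 'b
   \<Rightarrow> ('k \<Rightarrow> 'w::ab_group_add \<Rightarrow> 'w) \<Rightarrow> ('a \<Rightarrow> 'b \<Rightarrow> 'w) \<Rightarrow> ('w \<Rightarrow> 'w \<Rightarrow> 'w) \<Rightarrow> 'w \<Rightarrow> bool"
  where "tensor_alg sA mA uA sB mB uB sT tens mT uT \<longleftrightarrow>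
    is_tensor sA sB sT tens \<and> bilin_on sT UNIV sT UNIV sT mT \<and>
    (\<forall>a b a' b'. mT (tens a b) (tens a' b') = tens (mA a a') (mB b b')) \<and>
    uT = tens uA uB"

text \<open>Frobenius space E_A: all nearly Frobenius coproducts Delta : A -> A (x) A, where
  A (x) A is realized by (sAA, tAA) with algebra multiplication mAA.\<close>

definition frob_space ::
  "('k::field \<Rightarrow> 'a::ab_group_add \<Rightarrow> 'a) \<Rightarrow> ('a \<Rightarrow> 'a \<Rightarrow> 'a) \<Rightarrow> 'a
   \<Rightarrow> ('k \<Rightarrow> 'w::ab_group_add \<Rightarrow> 'w) \<Rightarrow> ('a \<Rightarrow> 'a \<Rightarrow> 'w) \<Rightarrow> ('w \<Rightarrow> 'w \<Rightarrow> 'w) \<Rightarrow> ('a \<Rightarrow> 'w) set"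
  where "frob_space s m u sAA tAA mAA =
    {\<Delta>. lin_on s UNIV sAA \<Delta> \<and>
         (\<forall>a b. \<Delta> (m a b) = mAA (tAA a u) (\<Delta> b) \<and> \<Delta> (m a b) = mAA (\<Delta> a) (tAA u b))}"

definition fun_scale :: "('k \<Rightarrow> 'w \<Rightarrow> 'w) \<Rightarrow> 'k \<Rightarrow> ('a \<Rightarrow> 'w) \<Rightarrow> 'a \<Rightarrow> 'w"
  where "fun_scale s c f = (\<lambda>x. s c (f x))"

definition edim :: "('k::field \<Rightarrow> 'v::ab_group_add \<Rightarrow> 'v) \<Rightarrow> 'v set \<Rightarrow> enat"
  where "edim s S = (if \<exists>B. finite B \<and> B \<subseteq> S \<and> module.span s B = S
                     then enat (vector_space.dim s S) else \<infinity>)"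

end

theory Submission
  imports Defs
begin

lemma vs_mult: "vector_space ((*) :: 'k::field \<Rightarrow> 'k \<Rightarrow> 'k)"
  by unfold_locales (auto simp: algebra_simps)

lemma vs_fun: "vector_space s \<Longrightarrow> vector_space (fun_scale s)"
  unfolding vector_space_def fun_scale_def by (auto simp: fun_eq_iff)

lemma vs_prod: "vector_space s1 \<Longrightarrow> vector_space s2 \<Longrightarrow> vector_space (prod_scale s1 s2)"
  unfolding vector_space_def prod_scale_def by auto

lemma lin_on_UNIV: "vector_space s1 \<Longrightarrow> vector_space s2 \<Longrightarrow> lin_on s1 UNIV s2 f \<longleftrightarrow> Vector_Spaces.linear s1 s2 f"
  unfolding lin_on_def Vector_Spaces.linear_iff by auto

definition bil where "bil s1 s2 s3 f \<longleftrightarrow> (\<forall>y. Vector_Spaces.linear s1 s3 (\<lambda>x. f x y)) \<and> (\<forall>x. Vector_Spaces.linear s2 s3 (f x))"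

lemma bilin_UNIV: "vector_space s1 \<Longrightarrow> vector_space s2 \<Longrightarrow> vector_space s3 \<Longrightarrow>
   bilin_on s1 UNIV s2 UNIV s3 f \<longleftrightarrow> bil s1 s2 s3 f"
  unfolding bilin_on_def bil_def by (simp add: lin_on_UNIV)

lemma is_tensorD:
  assumes "is_tensor s1 s2 s3 t"
  shows "vector_space s1" "vector_space s2" "vector_space s3" "bil s1 s2 s3 t"
    "module.span s3 {t x y |x y. True} = UNIV"
    "\<And>\<beta>. bil s1 s2 (*) \<beta> \<Longrightarrow> \<exists>h. Vector_Spaces.linear s3 (*) h \<and> (\<forall>x y. h (t x y) = \<beta> x y)"
  using assms unfolding is_tensor_def is_tensor_on_def
  by (auto simp: bilin_UNIV lin_on_UNIV vs_mult)

lemma linI: "vector_space s1 \<Longrightarrow> vector_space s2 \<Longrightarrow> (\<And>x y. f (x + y) = f x + f y) \<Longrightarrow>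
   (\<And>c x. f (s1 c x) = s2 c (f x)) \<Longrightarrow> Vector_Spaces.linear s1 s2 f"
  by (simp add: Vector_Spaces.linear_iff)

lemma linD: assumes "Vector_Spaces.linear s1 s2 f"
  shows "f (x + y) = f x + f y" "f (s1 c x) = s2 c (f x)" "vector_space s1" "vector_space s2"
  using assms by (auto simp: Vector_Spaces.linear_iff)

lemma lin0: assumes "Vector_Spaces.linear s1 s2 f" shows "f 0 = 0"
proof -
  interpret Vector_Spaces.linear s1 s2 f by fact
  show ?thesis by simp
qed

lemma lin_minus: assumes "Vector_Spaces.linear s1 s2 f" shows "f (- x) = - f x" "f (x - y) = f x - f y"
proof -
  interpret Vector_Spaces.linear s1 s2 f by fact
  show "f (- x) = - f x" "f (x - y) = f x - f y" by (simp_all add: neg diff)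
qed

lemma lin_sum: assumes "Vector_Spaces.linear s1 s2 f" shows "f (sum g A) = (\<Sum>a\<in>A. f (g a))"
proof -
  interpret Vector_Spaces.linear s1 s2 f by fact
  show ?thesis by (simp add: sum)
qed

lemma lin_comp: "Vector_Spaces.linear s1 s2 f \<Longrightarrow> Vector_Spaces.linear s2 s3 g \<Longrightarrow> Vector_Spaces.linear s1 s3 (\<lambda>x. g (f x))"
  using Vector_Spaces.linear_compose[of s1 s2 f s3 g] by (simp add: o_def)

lemma bilD: assumes "bil s1 s2 s3 f"
  shows "f (x + x') y = f x y + f x' y" "f (s1 c x) y = s3 c (f x y)"
    "f x (y + y') = f x y + f x y'" "f x (s2 c y) = s3 c (f x y)"
    "f 0 y = 0" "f x 0 = 0"
    "Vector_Spaces.linear s1 s3 (\<lambda>x. f x y)" "Vector_Spaces.linear s2 s3 (f x)"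
proof -
  have l1: "Vector_Spaces.linear s1 s3 (\<lambda>x. f x y)" and l2: "Vector_Spaces.linear s2 s3 (f x)"
    using assms unfolding bil_def by auto
  show "f (x + x') y = f x y + f x' y" "f (s1 c x) y = s3 c (f x y)" using linD[OF l1] by auto
  show "f x (y + y') = f x y + f x y'" "f x (s2 c y) = s3 c (f x y)" using linD[OF l2] by auto
  show "f 0 y = 0" using lin0[OF l1] by simp
  show "f x 0 = 0" using lin0[OF l2] by simp
  show "Vector_Spaces.linear s1 s3 (\<lambda>x. f x y)" "Vector_Spaces.linear s2 s3 (f x)" by fact+
qed

lemma bilI: "vector_space s1 \<Longrightarrow> vector_space s2 \<Longrightarrow> vector_space s3 \<Longrightarrow>
  (\<And>x x' y. f (x + x') y = f x y + f x' y) \<Longrightarrow> (\<And>c x y. f (s1 c x) y = s3 c (f x y)) \<Longrightarrow>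
  (\<And>x y y'. f x (y + y') = f x y + f x y') \<Longrightarrow> (\<And>c x y. f x (s2 c y) = s3 c (f x y)) \<Longrightarrow>
  bil s1 s2 s3 f"
  unfolding bil_def by (auto intro!: linI)

lemma lin_eval: "vector_space s \<Longrightarrow> Vector_Spaces.linear (fun_scale s) s (\<lambda>f. f z)"
  by (rule linI) (auto simp: vs_fun fun_scale_def)

lemma lin_eq_span:
  assumes "vector_space s1" "vector_space s2" "lin_on s1 S s2 f" "lin_on s1 S s2 g" 
    "module.span s1 B \<subseteq> S" "\<And>b. b \<in> B \<Longrightarrow> f b = g b" "x \<in> module.span s1 B"
  shows "f x = g x"
proof -
  interpret v1: vector_space s1 by fact
  interpret v2: vector_space s2 by fact
  have 0: "0 \<in> S" using assms(5) v1.span_zero by auto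
  have f0: "f 0 = 0" using assms(3) 0 unfolding lin_on_def by (metis v1.scale_zero_left v2.scale_zero_left)
  have g0: "g 0 = 0" using assms(4) 0 unfolding lin_on_def by (metis v1.scale_zero_left v2.scale_zero_left)
  have Ssub: "\<And>x. x \<in> v1.span B \<Longrightarrow> x \<in> S" using assms(5) by auto
  have "x \<in> v1.span B \<and> f x = g x"
    using assms(7)
  proof (induct rule: v1.span_induct)
    case step thus ?case using assms(6) v1.span_base by auto
  next
    case base
    show ?case
      unfolding v1.subspace_def using f0 g0 assms(3,4) Ssub unfolding lin_on_def
      by (auto intro: v1.span_add v1.span_scale v1.span_zero simp: Ssub)
  qed
  thus ?thesis by simp
qed

lemma lin_on_of_linear: "Vector_Spaces.linear s1 s2 f \<Longrightarrow> lin_on s1 S s2 f"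
  unfolding lin_on_def by (auto simp: Vector_Spaces.linear_iff)

lemma T_unique:
  assumes T: "is_tensor s1 s2 s3 t" and "vector_space s4"
    and "Vector_Spaces.linear s3 s4 h1" "Vector_Spaces.linear s3 s4 h2"
    and "\<And>x y. h1 (t x y) = h2 (t x y)"
  shows "h1 w = h2 w"
proof -
  interpret vector_space_pair s3 s4 using is_tensorD[OF T] assms(2) by (simp add: vector_space_pair_def)
  show ?thesis
    by (rule linear_eq_on[OF assms(3,4), of w "{t x y |x y. True}"]) 
       (use is_tensorD(5)[OF T] assms(5) in auto)
qed

lemma span_bil:
  assumes "bil s1 s2 s3 f" and x: "x \<in> module.span s1 X" and y: "y \<in> module.span s2 Y"
  shows "f x y \<in> module.span s3 {f a b |a b. a \<in> X \<and> b \<in> Y}"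
proof -
  note L = bilD[OF assms(1)]
  interpret v1: vector_space s1 using L(7) by (rule linD)
  interpret v2: vector_space s2 using L(8) by (rule linD)
  interpret v3: vector_space s3 using L(8) by (rule linD)
  let ?T = "{f a b |a b. a \<in> X \<and> b \<in> Y}"
  have inner: "f a y \<in> v3.span ?T" if "a \<in> X" for a
    using y
  proof (induct rule: v2.span_induct)
    case (step b) thus ?case using that by (auto intro!: v3.span_base)
  next
    case base
    show ?case unfolding v2.subspace_def
      by (auto simp: L intro: v3.span_add v3.span_scale v3.span_zero)
  qed
  show ?thesis using x
  proof (induct rule: v1.span_induct)
    case (step a) thus ?case using inner by auto
  next
    case base
    show ?case unfolding v1.subspace_def
      by (auto simp: L intro: v3.span_add v3.span_scale v3.span_zero)
  qed
qed

lemma rep_lin: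
  assumes "vector_space s" "module.independent s B" "module.span s B = UNIV"
  shows "Vector_Spaces.linear s (*) (\<lambda>x. module.representation s B x b)"
proof -
  interpret vector_space s by fact
  show ?thesis
    by (rule linI[OF \<open>vector_space s\<close> vs_mult]) 
       (simp_all add: representation_add representation_scale assms)
qed

lemma rep_basis:
  assumes "vector_space s" "module.independent s B" "b \<in> B" "b' \<in> B"
  shows "module.representation s B b' b = (if b = b' then 1 else 0)"
proof -
  interpret vector_space s by fact
  show ?thesis using representation_basis[OF assms(2,4)] by auto
qed

lemma T_coord:
  assumes T: "is_tensor s1 s2 s3 t"
    and B1: "module.independent s1 B1" "module.span s1 B1 = UNIV"
    and B2: "module.independent s2 B2" "module.span s2 B2 = UNIV"
  shows "\<exists>h. Vector_Spaces.linear s3 (*) h \<and> (\<forall>x y. h (t x y) =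
     module.representation s1 B1 x b1 * module.representation s2 B2 y b2)"
proof -
  note TD = is_tensorD[OF T]
  have "bil s1 s2 (*) (\<lambda>x y. module.representation s1 B1 x b1 * module.representation s2 B2 y b2)"
    using linD[OF rep_lin[OF TD(1) B1, of b1]] linD[OF rep_lin[OF TD(2) B2, of b2]]
    by (intro bilI TD vs_mult) (auto simp: algebra_simps)
  thus ?thesis using TD(6) by blast
qed

lemma T_basis:
  fixes s1 :: "'k::field \<Rightarrow> 'u::ab_group_add \<Rightarrow> 'u" and s2 :: "'k \<Rightarrow> 'v::ab_group_add \<Rightarrow> 'v"
    and s3 :: "'k \<Rightarrow> 'w::ab_group_add \<Rightarrow> 'w"
  assumes T: "is_tensor s1 s2 s3 t"
    and B1: "module.independent s1 B1" "module.span s1 B1 = UNIV"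
    and B2: "module.independent s2 B2" "module.span s2 B2 = UNIV"
  shows "inj_on (\<lambda>(x,y). t x y) (B1 \<times> B2)"
    "module.independent s3 ((\<lambda>(x,y). t x y) ` (B1 \<times> B2))"
    "module.span s3 ((\<lambda>(x,y). t x y) ` (B1 \<times> B2)) = UNIV"
proof -
  note TD = is_tensorD[OF T]
  interpret v3: vector_space s3 by (rule TD)
  have hval: "\<exists>h. Vector_Spaces.linear s3 (*) h \<and> (\<forall>b1'\<in>B1. \<forall>b2'\<in>B2. h (t b1' b2') =
      (if b1 = b1' \<and> b2 = b2' then 1 else 0))" if "b1 \<in> B1" "b2 \<in> B2" for b1 b2
  proof -
    obtain h where h: "Vector_Spaces.linear s3 (*) h" "\<forall>x y. h (t x y) =
     module.representation s1 B1 x b1 * module.representation s2 B2 y b2"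
      using T_coord[OF T B1 B2, of b1 b2] by blast
    show ?thesis using h rep_basis[OF TD(1) B1(1) that(1)] rep_basis[OF TD(2) B2(1) that(2)]
      by (intro exI[of _ h]) auto
  qed
  show inj: "inj_on (\<lambda>(x,y). t x y) (B1 \<times> B2)"
  proof (rule inj_onI, clarify)
    fix b1 b2 b1' b2' assume in1: "b1 \<in> B1" "b2 \<in> B2" "b1' \<in> B1" "b2' \<in> B2"
      and eq: "t b1 b2 = t b1' b2'"
    obtain h :: "'w \<Rightarrow> 'k" where h: "\<forall>b1'\<in>B1. \<forall>b2'\<in>B2. h (t b1' b2') = (if b1 = b1' \<and> b2 = b2' then 1 else 0)"
      using hval[OF in1(1,2)] by blast
    have "h (t b1 b2) = 1" using h in1 by auto
    hence "h (t b1' b2') = 1" using eq by simp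
    thus "b1 = b1' \<and> b2 = b2'" using h in1 by (auto split: if_splits)
  qed
  let ?I = "(\<lambda>(x,y). t x y) ` (B1 \<times> B2)"
  show "v3.independent ?I"
    unfolding v3.independent_explicit_module
  proof (intro allI impI)
    fix T u v assume fin: "finite T" and TI: "T \<subseteq> ?I" and s: "(\<Sum>v\<in>T. s3 (u v) v) = 0" and vT: "v \<in> T"
    obtain b1 b2 where bb: "b1 \<in> B1" "b2 \<in> B2" "v = t b1 b2" using vT TI by auto
    obtain h :: "'w \<Rightarrow> 'k" where hl: "Vector_Spaces.linear s3 (*) h"
      and h: "\<forall>b1'\<in>B1. \<forall>b2'\<in>B2. h (t b1' b2') = (if b1 = b1' \<and> b2 = b2' then 1 else 0)"
      using hval[OF bb(1,2)] by blast
    have hv: "h w = (if w = v then 1 else 0)" if wT: "w \<in> T" for w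
    proof -
      obtain c1 c2 where cc: "c1 \<in> B1" "c2 \<in> B2" "w = t c1 c2" using wT TI by auto
      have "t b1 b2 = t c1 c2 \<Longrightarrow> b1 = c1 \<and> b2 = c2"
        using inj_onD[OF inj, of "(b1,b2)" "(c1,c2)"] bb(1,2) cc(1,2) by simp
      then have e: "(w = v) = (b1 = c1 \<and> b2 = c2)" using bb(3) cc(3) by metis
      have "h (t c1 c2) = (if b1 = c1 \<and> b2 = c2 then 1 else 0)" using h cc(1,2) by blast
      thus ?thesis using e cc(3) by simp
    qed
    have "0 = h (\<Sum>v\<in>T. s3 (u v) v)" using s lin0[OF hl] by simp
    also have "\<dots> = (\<Sum>w\<in>T. u w * h w)" unfolding lin_sum[OF hl] linD(2)[OF hl] ..
    also have "\<dots> = (\<Sum>w\<in>T. (if w = v then u w else 0))" using hv by (intro sum.cong) auto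
    also have "\<dots> = u v" using fin vT by (simp only: sum.delta) simp
    finally show "u v = 0" by simp
  qed
  have "t x y \<in> v3.span ?I" for x y
  proof -
    have "t x y \<in> v3.span {t a b |a b. a \<in> B1 \<and> b \<in> B2}"
      using span_bil[OF TD(4), of x B1 y B2] B1 B2 by auto
    moreover have "{t a b |a b. a \<in> B1 \<and> b \<in> B2} = ?I" by auto
    ultimately show ?thesis by simp
  qed
  hence "{t x y |x y. True} \<subseteq> v3.span ?I" by auto
  hence "v3.span {t x y |x y. True} \<subseteq> v3.span ?I"
    by (metis v3.span_minimal v3.subspace_span)
  thus "v3.span ?I = UNIV" using TD(5) by auto
qed

lemma lin_add: assumes "Vector_Spaces.linear s1 s2 f" "Vector_Spaces.linear s1 s2 g"
  shows "Vector_Spaces.linear s1 s2 (\<lambda>x. f x + g x)"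
proof -
  interpret v2: vector_space s2 using linD(4)[OF assms(1)] .
  show ?thesis using linD(3,4)[OF assms(1)]
    by (intro linI) (simp_all add: linD(1,2)[OF assms(1)] linD(1,2)[OF assms(2)] v2.scale_right_distrib add_ac)
qed

lemma lin_scale: assumes "Vector_Spaces.linear s1 s2 f"
  shows "Vector_Spaces.linear s1 s2 (\<lambda>x. s2 c (f x))"
proof -
  interpret v2: vector_space s2 using linD(4)[OF assms(1)] .
  show ?thesis using linD(3,4)[OF assms(1)]
    by (intro linI) (simp_all add: linD(1,2)[OF assms(1)] v2.scale_right_distrib mult.commute)
qed

lemma lin_zero: assumes "vector_space s1" "vector_space s2" shows "Vector_Spaces.linear s1 s2 (\<lambda>x. 0)"
proof -
  interpret v2: vector_space s2 by fact
  show ?thesis by (intro linI assms) auto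
qed

lemma basis_UNIV:
  assumes "vector_space s"
  obtains B where "module.independent s B" "module.span s B = UNIV"
proof -
  interpret vector_space s by fact
  obtain B where "independent B" "UNIV \<subseteq> span B" using basis_exists[of UNIV] by blast
  thus ?thesis using that by auto
qed

lemma lin_eq_UNIV:
  assumes "Vector_Spaces.linear s1 s2 f" "Vector_Spaces.linear s1 s2 g"
    "module.span s1 B = UNIV" "\<And>b. b \<in> B \<Longrightarrow> f b = g b"
  shows "f x = g x"
proof -
  interpret vector_space_pair s1 s2 using linD(3,4)[OF assms(1)] by (simp add: vector_space_pair_def)
  show ?thesis by (rule linear_eq_on[OF assms(1,2)]) (use assms(3,4) in auto)
qed

lemma T_ext:
  assumes T: "is_tensor s1 s2 s3 t" and V: "vector_space s4" and g: "bil s1 s2 s4 g"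
  shows "\<exists>h. Vector_Spaces.linear s3 s4 h \<and> (\<forall>x y. h (t x y) = g x y)"
proof -
  note TD = is_tensorD[OF T]
  obtain B1 where B1: "module.independent s1 B1" "module.span s1 B1 = UNIV" using basis_UNIV[OF TD(1)] by blast
  obtain B2 where B2: "module.independent s2 B2" "module.span s2 B2 = UNIV" using basis_UNIV[OF TD(2)] by blast
  note TB = T_basis[OF T B1 B2]
  interpret vp: vector_space_pair s3 s4 using TD(3) V by (simp add: vector_space_pair_def)
  let ?tau = "\<lambda>(x,y). t x y"
  let ?I = "?tau ` (B1 \<times> B2)"
  define h where "h = vp.construct ?I (\<lambda>v. case_prod g (inv_into (B1 \<times> B2) ?tau v))"
  have hl: "Vector_Spaces.linear s3 s4 h" unfolding h_def by (rule vp.linear_construct[OF TB(2)])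
  have hb: "h (t b1 b2) = g b1 b2" if "b1 \<in> B1" "b2 \<in> B2" for b1 b2
  proof -
    have "h (t b1 b2) = case_prod g (inv_into (B1 \<times> B2) ?tau (?tau (b1,b2)))"
      unfolding h_def using that by (subst vp.construct_basis[OF TB(2)]) auto
    also have "inv_into (B1 \<times> B2) ?tau (?tau (b1,b2)) = (b1,b2)"
      by (rule inv_into_f_f[OF TB(1)]) (use that in auto)
    finally show ?thesis by simp
  qed
  have h2: "h (t x b2) = g x b2" if "b2 \<in> B2" for x b2
    by (rule lin_eq_UNIV[OF lin_comp[OF bilD(7)[OF TD(4)] hl] bilD(7)[OF g] B1(2)]) (use hb that in auto)
  have "h (t x y) = g x y" for x y
    by (rule lin_eq_UNIV[OF lin_comp[OF bilD(8)[OF TD(4)] hl] bilD(8)[OF g] B2(2)]) (use h2 in auto)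
  thus ?thesis using hl by blast
qed

definition tx :: "('u \<Rightarrow> 'v \<Rightarrow> 'w) \<Rightarrow> ('k::field \<Rightarrow> 'w::ab_group_add \<Rightarrow> 'w) \<Rightarrow> ('k \<Rightarrow> 'z::ab_group_add \<Rightarrow> 'z)
   \<Rightarrow> ('u \<Rightarrow> 'v \<Rightarrow> 'z) \<Rightarrow> 'w \<Rightarrow> 'z"
  where "tx t s3 s4 g = (SOME h. Vector_Spaces.linear s3 s4 h \<and> (\<forall>x y. h (t x y) = g x y))"

lemma tx:
  assumes T: "is_tensor s1 s2 s3 t" and V: "vector_space s4" and g: "bil s1 s2 s4 g"
  shows "Vector_Spaces.linear s3 s4 (tx t s3 s4 g)" "tx t s3 s4 g (t x y) = g x y"
  using someI_ex[OF T_ext[OF assms]] unfolding tx_def by auto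

lemma BIEXT:
  assumes T: "is_tensor s1 s2 s3 t" and Q: "is_tensor r1 r2 r3 q" and V: "vector_space s4"
    and G1: "\<And>a' b b'. Vector_Spaces.linear s1 s4 (\<lambda>a. G a a' b b')"
    and G2: "\<And>a b b'. Vector_Spaces.linear s2 s4 (\<lambda>a'. G a a' b b')"
    and G3: "\<And>a a' b'. Vector_Spaces.linear r1 s4 (\<lambda>b. G a a' b b')"
    and G4: "\<And>a a' b. Vector_Spaces.linear r2 s4 (\<lambda>b'. G a a' b b')"
  shows "\<exists>S. bil s3 r3 s4 S \<and> (\<forall>a a' b b'. S (t a a') (q b b') = G a a' b b')"
proof -
  note TD = is_tensorD[OF T] and QD = is_tensorD[OF Q]
  have bq: "bil r1 r2 s4 (G a a')" for a a' using G3 G4 unfolding bil_def by auto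
  define L where "L a a' = tx q r3 s4 (G a a')" for a a'
  have Ll: "Vector_Spaces.linear r3 s4 (L a a')" for a a' unfolding L_def by (rule tx(1)[OF Q V bq])
  have Lq: "L a a' (q b b') = G a a' b b'" for a a' b b' unfolding L_def by (rule tx(2)[OF Q V bq])
  note VF = vs_fun[OF V]
  have Lbil: "bil s1 s2 (fun_scale s4) L"
  proof (rule bilI[OF TD(1,2) VF])
    show "L (x + x') y = L x y + L x' y" for x x' y
      by (rule ext, simp, rule T_unique[OF Q V Ll[of "x + x'" y] lin_add[OF Ll Ll]])
        (simp add: Lq linD(1)[OF G1])
    show "L (s1 c x) y = fun_scale s4 c (L x y)" for c x y
      unfolding fun_scale_def
      by (rule ext, rule T_unique[OF Q V Ll lin_scale[OF Ll]]) (simp add: Lq linD(2)[OF G1])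
    show "L x (y + y') = L x y + L x y'" for x y y'
      by (rule ext, simp, rule T_unique[OF Q V Ll[of x "y + y'"] lin_add[OF Ll Ll]])
        (simp add: Lq linD(1)[OF G2])
    show "L x (s2 c y) = fun_scale s4 c (L x y)" for c x y
      unfolding fun_scale_def
      by (rule ext, rule T_unique[OF Q V Ll lin_scale[OF Ll]]) (simp add: Lq linD(2)[OF G2])
  qed
  define Lam where "Lam = tx t s3 (fun_scale s4) L"
  have Laml: "Vector_Spaces.linear s3 (fun_scale s4) Lam" unfolding Lam_def by (rule tx(1)[OF T VF Lbil])
  have Lamt: "Lam (t a a') = L a a'" for a a' unfolding Lam_def by (rule tx(2)[OF T VF Lbil])
  have lin1: "Vector_Spaces.linear s3 s4 (\<lambda>w. Lam w z)" for z
    using lin_comp[OF Laml lin_eval[OF V]] .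
  interpret v3: vector_space s3 by (rule TD)
  have "w \<in> {w. Vector_Spaces.linear r3 s4 (Lam w)}" for w
  proof (rule v3.span_subspace_induct[of w "{t x y |x y. True}"])
    show "w \<in> v3.span {t x y |x y. True}" using TD(5) by simp
    show "v3.subspace {w. Vector_Spaces.linear r3 s4 (Lam w)}"
      unfolding v3.subspace_def
    proof (intro conjI ballI allI; simp)
      show "Vector_Spaces.linear r3 s4 (Lam 0)"
        using lin0[OF Laml] lin_zero[OF QD(3) V] by (simp add: zero_fun_def)
      show "Vector_Spaces.linear r3 s4 (Lam (x + y))" if "Vector_Spaces.linear r3 s4 (Lam x)"
        "Vector_Spaces.linear r3 s4 (Lam y)" for x y
        using lin_add[OF that] linD(1)[OF Laml, of x y] by (simp add: plus_fun_def)
      show "Vector_Spaces.linear r3 s4 (Lam (s3 c x))" if "Vector_Spaces.linear r3 s4 (Lam x)" for c x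
        using lin_scale[OF that, of c] linD(2)[OF Laml, of c x] by (simp add: fun_scale_def)
    qed
    show "x \<in> {w. Vector_Spaces.linear r3 s4 (Lam w)}" if "x \<in> {t x y |x y. True}" for x
      using that Lamt Ll by auto
  qed
  hence lin2: "Vector_Spaces.linear r3 s4 (Lam w)" for w by simp
  have "bil s3 r3 s4 Lam" unfolding bil_def using lin1 lin2 by simp
  moreover have "Lam (t a a') (q b b') = G a a' b b'" for a a' b b' by (simp add: Lamt Lq)
  ultimately show ?thesis by blast
qed

lemma BIEQ:
  assumes T: "is_tensor s1 s2 s3 t" and Q: "is_tensor r1 r2 r3 q" and V: "vector_space s4"
    and f: "bil s3 r3 s4 f" and g: "bil s3 r3 s4 g"
    and eq: "\<And>a a' b b'. f (t a a') (q b b') = g (t a a') (q b b')"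
  shows "f w z = g w z"
proof -
  have "f w (q b b') = g w (q b b')" for b b'
    by (rule T_unique[OF T V bilD(7)[OF f] bilD(7)[OF g]]) (rule eq)
  thus ?thesis by (rule T_unique[OF Q V bilD(8)[OF f] bilD(8)[OF g]])
qed

lemma lin_id: "vector_space s \<Longrightarrow> Vector_Spaces.linear s s (\<lambda>x. x)"
  by (intro linI) auto

lemma kalgD: assumes "kalg s m u"
  shows "vector_space s" "bil s s s m" "m (m x y) z = m x (m y z)" "m u x = x" "m x u = x"
  using assms unfolding kalg_def by (auto simp: bilin_UNIV)

lemma tensor_algD: assumes "tensor_alg s1 m1 u1 s2 m2 u2 s3 t m3 u3"
  shows "is_tensor s1 s2 s3 t" "bil s3 s3 s3 m3" "m3 (t a b) (t a' b') = t (m1 a a') (m2 b b')"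
    "u3 = t u1 u2"
  using assms unfolding tensor_alg_def by (auto simp: bilin_UNIV is_tensorD)

lemma kalg_tensor:
  assumes A: "kalg s1 m1 u1" and B: "kalg s2 m2 u2" and T: "tensor_alg s1 m1 u1 s2 m2 u2 s3 t m3 u3"
  shows "kalg s3 m3 u3"
proof -
  note TA = tensor_algD[OF T]
  note TD = is_tensorD[OF TA(1)]
  note M = bilD[OF TA(2)]
  have s1: "m3 (m3 (t a b) (t a' b')) z = m3 (t a b) (m3 (t a' b') z)" for a b a' b' z
    by (rule T_unique[OF TA(1) TD(3) M(8) lin_comp[OF M(8) M(8)]])
       (simp add: TA(3) kalgD(3)[OF A] kalgD(3)[OF B])
  have s2: "m3 (m3 (t a b) y) z = m3 (t a b) (m3 y z)" for a b y z
    by (rule T_unique[OF TA(1) TD(3) lin_comp[OF M(8) M(7)] lin_comp[OF M(7) M(8)]])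
       (simp add: s1)
  have s3: "m3 (m3 x y) z = m3 x (m3 y z)" for x y z
    by (rule T_unique[OF TA(1) TD(3) lin_comp[OF M(7) M(7)] M(7)])
       (simp add: s2)
  have u1: "m3 u3 x = x" for x
    by (rule T_unique[OF TA(1) TD(3) M(8) lin_id[OF TD(3)]])
       (simp add: TA(3,4) kalgD(4)[OF A] kalgD(4)[OF B])
  have u2: "m3 x u3 = x" for x
    by (rule T_unique[OF TA(1) TD(3) M(7) lin_id[OF TD(3)]])
       (simp add: TA(3,4) kalgD(5)[OF A] kalgD(5)[OF B])
  show ?thesis unfolding kalg_def using TD(3) TA(2) s3 u1 u2 by (simp add: bilin_UNIV)
qed

definition Zs :: "('a \<Rightarrow> 'a \<Rightarrow> 'w) \<Rightarrow> ('w \<Rightarrow> 'w \<Rightarrow> 'w) \<Rightarrow> 'a \<Rightarrow> 'w set"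
  where "Zs t m2 u = {z. \<forall>a. m2 (t a u) z = m2 z (t u a)}"

lemma E1:
  assumes A: "kalg s m u" and D: "\<Delta> \<in> frob_space s m u s2 t m2"
  shows "\<Delta> a = m2 (t a u) (\<Delta> u)" "\<Delta> u \<in> Zs t m2 u"
proof -
  have D': "\<Delta> (m a b) = m2 (t a u) (\<Delta> b)" "\<Delta> (m a b) = m2 (\<Delta> a) (t u b)" for a b
    using D unfolding frob_space_def mem_Collect_eq by blast+
  show "\<Delta> a = m2 (t a u) (\<Delta> u)" using D'(1)[of a u] kalgD(5)[OF A] by simp
  have "m2 (t a u) (\<Delta> u) = m2 (\<Delta> u) (t u a)" for a
    using D'(1)[of a u] D'(2)[of u a] kalgD(4,5)[OF A] by simp
  thus "\<Delta> u \<in> Zs t m2 u" unfolding Zs_def by simp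
qed

lemma E2:
  assumes A: "kalg s m u" and T: "tensor_alg s m u s m u s2 t m2 u2" and z: "z \<in> Zs t m2 u"
  shows "(\<lambda>a. m2 (t a u) z) \<in> frob_space s m u s2 t m2"
proof -
  note TA = tensor_algD[OF T]
  note TD = is_tensorD[OF TA(1)]
  note K = kalg_tensor[OF A A T]
  note M = bilD[OF TA(2)]
  have tm: "t (m a b) u = m2 (t a u) (t b u)" for a b using TA(3) kalgD(4)[OF A] by simp
  have tm2: "t u (m a b) = m2 (t u a) (t u b)" for a b using TA(3) kalgD(4)[OF A] by simp
  have lin: "Vector_Spaces.linear s s2 (\<lambda>a. m2 (t a u) z)"
    using lin_comp[OF bilD(7)[OF TD(4)] M(7)] .
  have zz: "m2 (t a u) z = m2 z (t u a)" for a using z unfolding Zs_def by auto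
  show ?thesis unfolding frob_space_def
  proof (intro CollectI conjI allI)
    show "lin_on s UNIV s2 (\<lambda>a. m2 (t a u) z)" using lin by (rule lin_on_of_linear)
    fix a b
    show "m2 (t (m a b) u) z = m2 (t a u) (m2 (t b u) z)" by (simp add: tm kalgD(3)[OF K])
    have "m2 (t (m a b) u) z = m2 (t a u) (m2 (t b u) z)" by (simp add: tm kalgD(3)[OF K])
    also have "\<dots> = m2 (t a u) (m2 z (t u b))" by (simp only: zz)
    also have "\<dots> = m2 (m2 (t a u) z) (t u b)" by (simp only: kalgD(3)[OF K])
    finally show "m2 (t (m a b) u) z = m2 (m2 (t a u) z) (t u b)" .
  qed
qed

lemma frob_sub:
  assumes A: "kalg s m u" and T: "tensor_alg s m u s m u s2 t m2 u2"
  shows "module.subspace (fun_scale s2) (frob_space s m u s2 t m2)"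
proof -
  note TA = tensor_algD[OF T]
  note TD = is_tensorD[OF TA(1)]
  note M = bilD[OF TA(2)]
  interpret v: vector_space s2 by (rule TD)
  interpret vf: vector_space "fun_scale s2" by (rule vs_fun[OF TD(3)])
  have L: "lin_on s UNIV s2 \<Delta> \<longleftrightarrow> Vector_Spaces.linear s s2 \<Delta>" for \<Delta>
    by (rule lin_on_UNIV[OF kalgD(1)[OF A] TD(3)])
  have F: "\<Delta> \<in> frob_space s m u s2 t m2 \<longleftrightarrow> Vector_Spaces.linear s s2 \<Delta> \<and>
     (\<forall>a b. \<Delta> (m a b) = m2 (t a u) (\<Delta> b)) \<and> (\<forall>a b. \<Delta> (m a b) = m2 (\<Delta> a) (t u b))" for \<Delta>
    unfolding frob_space_def L by auto
  show ?thesis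
  proof (rule vf.subspaceI)
    show "0 \<in> frob_space s m u s2 t m2" unfolding F
      using lin_zero[OF kalgD(1)[OF A] TD(3)] by (simp add: zero_fun_def M)
  next
    fix x y assume "x \<in> frob_space s m u s2 t m2" "y \<in> frob_space s m u s2 t m2"
    hence x: "Vector_Spaces.linear s s2 x" "\<And>a b. x (m a b) = m2 (t a u) (x b)" "\<And>a b. x (m a b) = m2 (x a) (t u b)"
      and y: "Vector_Spaces.linear s s2 y" "\<And>a b. y (m a b) = m2 (t a u) (y b)" "\<And>a b. y (m a b) = m2 (y a) (t u b)"
      unfolding F by blast+
    have "Vector_Spaces.linear s s2 (\<lambda>a. x a + y a)" using x y by (intro lin_add) auto
    moreover have "(x + y) (m a b) = m2 (t a u) ((x + y) b)" for a b
      using x(2)[of a b] y(2)[of a b] by (simp add: M)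
    moreover have "(x + y) (m a b) = m2 ((x + y) a) (t u b)" for a b
      using x(3)[of a b] y(3)[of a b] by (simp add: M)
    ultimately show "x + y \<in> frob_space s m u s2 t m2" unfolding F by (simp add: plus_fun_def)
  next
    fix c x assume "x \<in> frob_space s m u s2 t m2"
    hence x: "Vector_Spaces.linear s s2 x" "\<And>a b. x (m a b) = m2 (t a u) (x b)" "\<And>a b. x (m a b) = m2 (x a) (t u b)"
      unfolding F by blast+
    have "Vector_Spaces.linear s s2 (\<lambda>a. s2 c (x a))" using x by (intro lin_scale) auto
    moreover have "fun_scale s2 c x (m a b) = m2 (t a u) (fun_scale s2 c x b)" for a b
      using x(2)[of a b] by (simp add: M fun_scale_def)
    moreover have "fun_scale s2 c x (m a b) = m2 (fun_scale s2 c x a) (t u b)" for a b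
      using x(3)[of a b] by (simp add: M fun_scale_def)
    ultimately show "fun_scale s2 c x \<in> frob_space s m u s2 t m2" unfolding F by (simp add: fun_scale_def)
  qed
qed

lemma Zs_sub:
  assumes T: "tensor_alg s m u s m u s2 t m2 u2"
  shows "module.subspace s2 (Zs t m2 u)"
proof -
  note TA = tensor_algD[OF T]
  note TD = is_tensorD[OF TA(1)]
  note M = bilD[OF TA(2)]
  interpret v: vector_space s2 by (rule TD)
  show ?thesis unfolding v.subspace_def Zs_def by (auto simp: M)
qed

lemma edim_basis:
  assumes V: "vector_space s" and B: "B \<subseteq> S" "module.independent s B" "module.span s B = S"
  shows "edim s S = (if finite B then enat (card B) else \<infinity>)"
proof -
  interpret vector_space s by fact
  show ?thesis
  proof (cases "finite B")
    case True
    have "dim S = card B"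
    proof (rule dim_eq_card)
      show "span B = span S" by (metis B(3) span_span)
    qed (rule B(2))
    have "\<exists>C. finite C \<and> C \<subseteq> S \<and> span C = S" using True B by blast
    thus ?thesis unfolding edim_def using True \<open>dim S = card B\<close> by simp
  next
    case False
    have "\<not> (\<exists>C. finite C \<and> C \<subseteq> S \<and> span C = S)"
    proof
      assume "\<exists>C. finite C \<and> C \<subseteq> S \<and> span C = S"
      then obtain C where "finite C" "span C = S" by blast
      hence "finite B" using independent_span_bound[of C B] B(2,3) span_superset by auto
      thus False using False by simp
    qed
    thus ?thesis unfolding edim_def using False by simp
  qed
qed

lemma basis_sub:
  assumes V: "vector_space s" and S: "module.subspace s S"
  obtains B where "B \<subseteq> S" "module.independent s B" "module.span s B = S"
proof -
  interpret vector_space s by fact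
  obtain B where B: "B \<subseteq> S" "independent B" "S \<subseteq> span B" by (rule maximal_independent_subset[of S])
  have "span B = S" by (rule span_subspace[OF B(1,3) S])
  show ?thesis by (rule that[OF B(1) B(2) \<open>span B = S\<close>])
qed

lemma edim_iso:
  assumes f: "Vector_Spaces.linear s1 s2 f" and S: "module.subspace s1 S" and inj: "inj_on f S"
  shows "edim s2 (f ` S) = edim s1 S"
proof -
  interpret vp: vector_space_pair s1 s2 using linD(3,4)[OF f] by (simp add: vector_space_pair_def)
  obtain B where B: "B \<subseteq> S" "vp.vs1.independent B" "vp.vs1.span B = S" using basis_sub[OF linD(3)[OF f] S] by blast
  have i: "vp.vs2.independent (f ` B)"
    by (rule vp.linear_independent_injective_image[OF f B(2)]) (simp only: B(3) inj)
  have sp: "vp.vs2.span (f ` B) = f ` S" using vp.linear_span_image[OF f, of B] B(3) by simp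
  have ib: "inj_on f B" using inj B(1) inj_on_subset by blast
  have sub: "f ` B \<subseteq> f ` S" using B(1) by blast
  have "edim s2 (f ` S) = (if finite (f ` B) then enat (card (f ` B)) else \<infinity>)"
    by (rule edim_basis[OF linD(4)[OF f] sub i sp])
  also have "\<dots> = (if finite B then enat (card B) else \<infinity>)"
    using ib by (simp add: finite_image_iff card_image)
  also have "\<dots> = edim s1 S" using edim_basis[OF linD(3)[OF f] B] by simp
  finally show ?thesis .
qed

lemma edim_prod:
  fixes s1 :: "'k::field \<Rightarrow> 'u::ab_group_add \<Rightarrow> 'u" and s2 :: "'k \<Rightarrow> 'v::ab_group_add \<Rightarrow> 'v"
  assumes V1: "vector_space s1" and V2: "vector_space s2"
    and S: "module.subspace s1 S" and T: "module.subspace s2 T"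
  shows "edim (prod_scale s1 s2) (S \<times> T) = edim s1 S + edim s2 T"
proof -
  interpret v1: vector_space s1 by fact
  interpret v2: vector_space s2 by fact
  interpret vp: vector_space "prod_scale s1 s2" by (rule vs_prod[OF V1 V2])
  interpret p1: vector_space_pair s1 "prod_scale s1 s2" by unfold_locales
  interpret p2: vector_space_pair s2 "prod_scale s1 s2" by unfold_locales
  have l1: "Vector_Spaces.linear s1 (prod_scale s1 s2) (\<lambda>x. (x, 0))"
    by (intro linI V1 vp.vector_space_axioms) (auto simp: prod_scale_def)
  have l2: "Vector_Spaces.linear s2 (prod_scale s1 s2) (\<lambda>x. (0, x))"
    by (intro linI V2 vp.vector_space_axioms) (auto simp: prod_scale_def)
  obtain B1 where B1: "B1 \<subseteq> S" "v1.independent B1" "v1.span B1 = S" using basis_sub[OF V1 S] by blast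
  obtain B2 where B2: "B2 \<subseteq> T" "v2.independent B2" "v2.span B2 = T" using basis_sub[OF V2 T] by blast
  have n1: "0 \<notin> B1" using B1(2) v1.dependent_zero by blast
  have n2: "0 \<notin> B2" using B2(2) v2.dependent_zero by blast
  let ?C1 = "(\<lambda>x. (x, 0::'v)) ` B1" and ?C2 = "(\<lambda>x. (0::'u, x)) ` B2"
  have sp1: "vp.span ((\<lambda>x. (x, 0)) ` X) = (\<lambda>x. (x, 0)) ` v1.span X" for X
    by (rule p1.linear_span_image[OF l1])
  have sp2: "vp.span ((\<lambda>x. (0, x)) ` X) = (\<lambda>x. (0, x)) ` v2.span X" for X
    by (rule p2.linear_span_image[OF l2])
  have spU: "vp.span ((\<lambda>x. (x, 0)) ` X \<union> (\<lambda>x. (0, x)) ` Y) = v1.span X \<times> v2.span Y" for X Y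
    unfolding vp.span_Un sp1 sp2 by force
  have disj: "?C1 \<inter> ?C2 = {}" using n1 by auto
  have ind: "vp.independent (?C1 \<union> ?C2)"
    unfolding vp.dependent_def
  proof safe
    fix a assume a: "a \<in> B1" and sp: "(a, 0) \<in> vp.span (?C1 \<union> ?C2 - {(a, 0)})"
    have "?C1 \<union> ?C2 - {(a, 0)} = (\<lambda>x. (x, 0)) ` (B1 - {a}) \<union> ?C2" using n1 a by auto
    hence "a \<in> v1.span (B1 - {a})" using sp spU by auto
    thus False using a B1(2) v1.dependent_def by blast
  next
    fix b assume b: "b \<in> B2" and sp: "(0, b) \<in> vp.span (?C1 \<union> ?C2 - {(0, b)})"
    have "?C1 \<union> ?C2 - {(0, b)} = ?C1 \<union> (\<lambda>x. (0, x)) ` (B2 - {b})" using n2 b by auto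
    hence "b \<in> v2.span (B2 - {b})" using sp spU by auto
    thus False using b B2(2) v2.dependent_def by blast
  qed
  have spC: "vp.span (?C1 \<union> ?C2) = S \<times> T" using spU B1(3) B2(3) by simp
  have sub: "?C1 \<union> ?C2 \<subseteq> S \<times> T" using B1(1) B2(1) v1.subspace_0[OF S] v2.subspace_0[OF T] by auto
  have e: "edim (prod_scale s1 s2) (S \<times> T) = (if finite (?C1 \<union> ?C2) then enat (card (?C1 \<union> ?C2)) else \<infinity>)"
    by (rule edim_basis[OF vp.vector_space_axioms sub ind spC])
  have i1: "inj_on (\<lambda>x. (x, 0::'v)) B1" "inj_on (\<lambda>x. (0::'u, x)) B2" by (auto simp: inj_on_def)
  have fin: "finite (?C1 \<union> ?C2) \<longleftrightarrow> finite B1 \<and> finite B2"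
    using i1 finite_image_iff[OF i1(1)] finite_image_iff[OF i1(2)] by auto
  have card: "finite B1 \<Longrightarrow> finite B2 \<Longrightarrow> card (?C1 \<union> ?C2) = card B1 + card B2"
  proof -
    assume f: "finite B1" "finite B2"
    have "card (?C1 \<union> ?C2) = card ?C1 + card ?C2" by (rule card_Un_disjoint) (use f disj in auto)
    thus ?thesis by (simp only: card_image[OF i1(1)] card_image[OF i1(2)])
  qed
  show ?thesis unfolding e edim_basis[OF V1 B1] edim_basis[OF V2 B2] using fin card by auto
qed

lemma edim_tensor:
  assumes V3: "vector_space s3" and V1: "vector_space s1" and V2: "vector_space s2"
    and B1: "B1 \<subseteq> S1" "module.independent s1 B1" "module.span s1 B1 = S1"
    and B2: "B2 \<subseteq> S2" "module.independent s2 B2" "module.span s2 B2 = S2"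
    and inj: "inj_on (\<lambda>(x,y). \<theta> x y) (B1 \<times> B2)"
    and B3: "(\<lambda>(x,y). \<theta> x y) ` (B1 \<times> B2) \<subseteq> S3" "module.independent s3 ((\<lambda>(x,y). \<theta> x y) ` (B1 \<times> B2))"
       "module.span s3 ((\<lambda>(x,y). \<theta> x y) ` (B1 \<times> B2)) = S3"
  shows "edim s3 S3 = edim s1 S1 * edim s2 S2"
proof -
  have "edim s3 S3 = (if finite (B1 \<times> B2) then enat (card (B1 \<times> B2)) else \<infinity>)"
    using edim_basis[OF V3 B3] inj by (simp add: finite_image_iff card_image)
  thus ?thesis unfolding edim_basis[OF V1 B1] edim_basis[OF V2 B2]
    by (auto simp: finite_cartesian_product_iff card_cartesian_product zero_enat_def)
qed

lemma lin_on_comp: "lin_on s1 S s2 f \<Longrightarrow> Vector_Spaces.linear s2 s3 h \<Longrightarrow> lin_on s1 S s3 (\<lambda>x. h (f x))"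
  unfolding lin_on_def by (auto simp: linD)

lemma mk_tensor_on:
  fixes s1 :: "'k::field \<Rightarrow> 'u::ab_group_add \<Rightarrow> 'u" and s2 :: "'k \<Rightarrow> 'v::ab_group_add \<Rightarrow> 'v"
    and s3 :: "'k \<Rightarrow> 'w::ab_group_add \<Rightarrow> 'w" and \<theta> :: "'u \<Rightarrow> 'v \<Rightarrow> 'w"
  assumes V1: "vector_space s1" and V2: "vector_space s2" and V3: "vector_space s3"
    and B1: "B1 \<subseteq> S1" "module.independent s1 B1" "module.span s1 B1 = S1"
    and B2: "B2 \<subseteq> S2" "module.independent s2 B2" "module.span s2 B2 = S2"
    and into: "\<forall>x\<in>S1. \<forall>y\<in>S2. \<theta> x y \<in> S3"
    and bl: "bilin_on s1 S1 s2 S2 s3 \<theta>"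
    and inj: "inj_on (\<lambda>(x,y). \<theta> x y) (B1 \<times> B2)"
    and ind: "module.independent s3 ((\<lambda>(x,y). \<theta> x y) ` (B1 \<times> B2))"
    and sp: "module.span s3 ((\<lambda>(x,y). \<theta> x y) ` (B1 \<times> B2)) = S3"
  shows "is_tensor_on s1 S1 s2 S2 s3 S3 \<theta>"
proof -
  interpret v1: vector_space s1 by fact
  interpret v2: vector_space s2 by fact
  interpret v3: vector_space s3 by fact
  interpret vp: vector_space_pair s3 "(*)" using V3 vs_mult by (simp add: vector_space_pair_def)
  let ?tau = "\<lambda>(x,y). \<theta> x y"
  let ?I = "?tau ` (B1 \<times> B2)"
  have S3sub: "v3.subspace S3" by (subst sp[symmetric]) (rule v3.subspace_span)
  have "v3.span {\<theta> x y |x y. x \<in> S1 \<and> y \<in> S2} = S3"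
  proof
    show "v3.span {\<theta> x y |x y. x \<in> S1 \<and> y \<in> S2} \<subseteq> S3"
      by (rule v3.span_minimal[OF _ S3sub]) (use into in auto)
    have "?I \<subseteq> {\<theta> x y |x y. x \<in> S1 \<and> y \<in> S2}" using B1(1) B2(1) by auto
    from v3.span_mono[OF this] show "S3 \<subseteq> v3.span {\<theta> x y |x y. x \<in> S1 \<and> y \<in> S2}" unfolding sp .
  qed
  moreover have "\<exists>h. lin_on s3 S3 (*) h \<and> (\<forall>x\<in>S1. \<forall>y\<in>S2. h (\<theta> x y) = \<beta> x y)"
    if beta: "bilin_on s1 S1 s2 S2 (*) \<beta>" for \<beta> :: "'u \<Rightarrow> 'v \<Rightarrow> 'k"
  proof -
    define h where "h = vp.construct ?I (\<lambda>v. case_prod \<beta> (inv_into (B1 \<times> B2) ?tau v))"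
    have hl: "Vector_Spaces.linear s3 (*) h" unfolding h_def by (rule vp.linear_construct[OF ind])
    have hb: "h (\<theta> b1 b2) = \<beta> b1 b2" if "b1 \<in> B1" "b2 \<in> B2" for b1 b2
    proof -
      have "h (\<theta> b1 b2) = case_prod \<beta> (inv_into (B1 \<times> B2) ?tau (?tau (b1,b2)))"
        unfolding h_def using that by (subst vp.construct_basis[OF ind]) auto
      also have "inv_into (B1 \<times> B2) ?tau (?tau (b1,b2)) = (b1,b2)"
        by (rule inv_into_f_f[OF inj]) (use that in auto)
      finally show ?thesis by simp
    qed
    have h2: "h (\<theta> x b2) = \<beta> x b2" if "b2 \<in> B2" "x \<in> S1" for x b2
    proof (rule lin_eq_span[OF V1 vs_mult _ _ _ _ that(2)[folded B1(3)]])
      have "b2 \<in> S2" using that(1) B2(1) by blast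
      thus "lin_on s1 S1 (*) (\<lambda>x. h (\<theta> x b2))"
        using bl unfolding bilin_on_def by (intro lin_on_comp[OF _ hl]) blast
      show "lin_on s1 S1 (*) (\<lambda>x. \<beta> x b2)" using beta \<open>b2 \<in> S2\<close> unfolding bilin_on_def by blast
      show "v1.span B1 \<subseteq> S1" using B1(3) by (rule eq_refl)
      show "\<And>b. b \<in> B1 \<Longrightarrow> h (\<theta> b b2) = \<beta> b b2" using hb that(1) by blast
    qed
    have h3: "h (\<theta> x y) = \<beta> x y" if "x \<in> S1" "y \<in> S2" for x y
    proof (rule lin_eq_span[OF V2 vs_mult _ _ _ _ that(2)[folded B2(3)]])
      show "lin_on s2 S2 (*) (\<lambda>y. h (\<theta> x y))"
        using bl that(1) unfolding bilin_on_def by (intro lin_on_comp[OF _ hl]) blast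
      show "lin_on s2 S2 (*) (\<lambda>y. \<beta> x y)" using beta that(1) unfolding bilin_on_def by blast
      show "v2.span B2 \<subseteq> S2" using B2(3) by (rule eq_refl)
      show "\<And>b. b \<in> B2 \<Longrightarrow> h (\<theta> x b) = \<beta> x b" using h2 that(1) by blast
    qed
    show ?thesis using h3 lin_on_of_linear[OF hl] by blast
  qed
  ultimately show ?thesis unfolding is_tensor_on_def using into bl by blast
qed

lemma kalg_prod:
  assumes A: "kalg sA mA uA" and B: "kalg sB mB uB"
  shows "kalg (prod_scale sA sB) (prod_mult mA mB) (uA, uB)"
proof -
  note a = kalgD[OF A] and b = kalgD[OF B]
  note ma = bilD[OF a(2)] and mb = bilD[OF b(2)]
  have V: "vector_space (prod_scale sA sB)" by (rule vs_prod[OF a(1) b(1)])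
  have "bil (prod_scale sA sB) (prod_scale sA sB) (prod_scale sA sB) (prod_mult mA mB)"
    by (rule bilI[OF V V V]) (simp_all add: prod_mult_def prod_scale_def ma mb)
  thus ?thesis unfolding kalg_def using V
    by (simp add: bilin_UNIV prod_mult_def a(3,4,5) b(3,4,5))
qed

lemma frob_iff:
  assumes "vector_space s" "vector_space s2"
  shows "\<Delta> \<in> frob_space s m u s2 t m2 \<longleftrightarrow> Vector_Spaces.linear s s2 \<Delta> \<and>
     (\<forall>a b. \<Delta> (m a b) = m2 (t a u) (\<Delta> b)) \<and> (\<forall>a b. \<Delta> (m a b) = m2 (\<Delta> a) (t u b))"
  unfolding frob_space_def lin_on_UNIV[OF assms] by blast

lemma bil_comp:
  assumes "bil s1 s2 s3 f" "Vector_Spaces.linear r1 s1 g1" "Vector_Spaces.linear r2 s2 g2"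
  shows "bil r1 r2 s3 (\<lambda>x y. f (g1 x) (g2 y))"
  using assms unfolding bil_def by (auto intro: lin_comp)

lemma part1:
  fixes sA :: "'k::field \<Rightarrow> 'a::ab_group_add \<Rightarrow> 'a" and mA :: "'a \<Rightarrow> 'a \<Rightarrow> 'a" and uA :: 'a
    and sB :: "'k \<Rightarrow> 'b::ab_group_add \<Rightarrow> 'b" and mB :: "'b \<Rightarrow> 'b \<Rightarrow> 'b" and uB :: 'b
    and sAA :: "'k \<Rightarrow> 'aa::ab_group_add \<Rightarrow> 'aa" and tAA :: "'a \<Rightarrow> 'a \<Rightarrow> 'aa"
    and mAA :: "'aa \<Rightarrow> 'aa \<Rightarrow> 'aa" and uAA :: 'aa
    and sBB :: "'k \<Rightarrow> 'bb::ab_group_add \<Rightarrow> 'bb" and tBB :: "'b \<Rightarrow> 'b \<Rightarrow> 'bb"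
    and mBB :: "'bb \<Rightarrow> 'bb \<Rightarrow> 'bb" and uBB :: 'bb
    and sP :: "'k \<Rightarrow> 'p::ab_group_add \<Rightarrow> 'p" and tP :: "'a \<times> 'b \<Rightarrow> 'a \<times> 'b \<Rightarrow> 'p"
    and mP :: "'p \<Rightarrow> 'p \<Rightarrow> 'p" and uP :: 'p
  assumes A: "kalg sA mA uA"
    and B: "kalg sB mB uB"
    and AA: "tensor_alg sA mA uA sA mA uA sAA tAA mAA uAA"
    and BB: "tensor_alg sB mB uB sB mB uB sBB tBB mBB uBB"
    and P: "tensor_alg (prod_scale sA sB) (prod_mult mA mB) (uA, uB)
                       (prod_scale sA sB) (prod_mult mA mB) (uA, uB) sP tP mP uP"
  shows
    "(\<exists>\<phi>. lin_on (fun_scale sP) (frob_space (prod_scale sA sB) (prod_mult mA mB) (uA, uB) sP tP mP)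
                 (prod_scale (fun_scale sAA) (fun_scale sBB)) \<phi> \<and>
          bij_betw \<phi> (frob_space (prod_scale sA sB) (prod_mult mA mB) (uA, uB) sP tP mP)
                     (frob_space sA mA uA sAA tAA mAA \<times> frob_space sB mB uB sBB tBB mBB))
   \<and> edim (fun_scale sP) (frob_space (prod_scale sA sB) (prod_mult mA mB) (uA, uB) sP tP mP)
       = edim (fun_scale sAA) (frob_space sA mA uA sAA tAA mAA)
         + edim (fun_scale sBB) (frob_space sB mB uB sBB tBB mBB)"
proof -
  let ?sAB = "prod_scale sA sB" and ?mAB = "prod_mult mA mB"
  let ?EAB = "frob_space ?sAB ?mAB (uA, uB) sP tP mP"
  let ?EA = "frob_space sA mA uA sAA tAA mAA" and ?EB = "frob_space sB mB uB sBB tBB mBB"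
  note a = kalgD[OF A] and b = kalgD[OF B]
  note ma = bilD[OF a(2)] and mb = bilD[OF b(2)]
  note AAd = tensor_algD[OF AA] and BBd = tensor_algD[OF BB] and Pd = tensor_algD[OF P]
  note AAt = is_tensorD[OF AAd(1)] and BBt = is_tensorD[OF BBd(1)] and Pt = is_tensorD[OF Pd(1)]
  note tA = bilD[OF AAt(4)] and tB = bilD[OF BBt(4)] and tp = bilD[OF Pt(4)]
  note mAAb = bilD[OF AAd(2)] and mBBb = bilD[OF BBd(2)] and mPb = bilD[OF Pd(2)]
  have VAB: "vector_space ?sAB" by (rule Pt(1))
  have KAB: "kalg ?sAB ?mAB (uA, uB)" by (rule kalg_prod[OF A B])
  interpret vA: vector_space sA by (rule a(1))
  interpret vB: vector_space sB by (rule b(1))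
  interpret vAA: vector_space sAA by (rule AAt(3))
  interpret vBB: vector_space sBB by (rule BBt(3))
  interpret vP: vector_space sP by (rule Pt(3))
  have ps: "prod_scale sA sB c x = (sA c (fst x), sB c (snd x))" for c x by (simp add: prod_scale_def)
  have pm: "prod_mult mA mB x y = (mA (fst x) (fst y), mB (snd x) (snd y))" for x y by (simp add: prod_mult_def)
  have lfst: "Vector_Spaces.linear ?sAB sA fst" by (rule linI[OF VAB a(1)]) (simp_all add: ps)
  have lsnd: "Vector_Spaces.linear ?sAB sB snd" by (rule linI[OF VAB b(1)]) (simp_all add: ps)
  have lin1: "Vector_Spaces.linear sA ?sAB (\<lambda>a. (a, 0))" by (rule linI[OF a(1) VAB]) (simp_all add: ps)
  have lin2: "Vector_Spaces.linear sB ?sAB (\<lambda>b. (0, b))" by (rule linI[OF b(1) VAB]) (simp_all add: ps)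
  have bpA: "bil ?sAB ?sAB sAA (\<lambda>x y. tAA (fst x) (fst y))" by (rule bil_comp[OF AAt(4) lfst lfst])
  have bpB: "bil ?sAB ?sAB sBB (\<lambda>x y. tBB (snd x) (snd y))" by (rule bil_comp[OF BBt(4) lsnd lsnd])
  have biA: "bil sA sA sP (\<lambda>a a'. tP (a, 0) (a', 0))" by (rule bil_comp[OF Pt(4) lin1 lin1])
  have biB: "bil sB sB sP (\<lambda>b b'. tP (0, b) (0, b'))" by (rule bil_comp[OF Pt(4) lin2 lin2])
  define pA where "pA = tx tP sP sAA (\<lambda>x y. tAA (fst x) (fst y))"
  define pB where "pB = tx tP sP sBB (\<lambda>x y. tBB (snd x) (snd y))"
  define iA where "iA = tx tAA sAA sP (\<lambda>a a'. tP (a, 0) (a', 0))"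
  define iB where "iB = tx tBB sBB sP (\<lambda>b b'. tP (0, b) (0, b'))"
  have pAl: "Vector_Spaces.linear sP sAA pA" and pAt: "pA (tP x y) = tAA (fst x) (fst y)" for x y
    unfolding pA_def by (rule tx[OF Pd(1) AAt(3) bpA])+
  have pBl: "Vector_Spaces.linear sP sBB pB" and pBt: "pB (tP x y) = tBB (snd x) (snd y)" for x y
    unfolding pB_def by (rule tx[OF Pd(1) BBt(3) bpB])+
  have iAl: "Vector_Spaces.linear sAA sP iA" and iAt: "iA (tAA a a') = tP (a, 0) (a', 0)" for a a'
    unfolding iA_def by (rule tx[OF AAd(1) Pt(3) biA])+
  have iBl: "Vector_Spaces.linear sBB sP iB" and iBt: "iB (tBB b b') = tP (0, b) (0, b')" for b b'
    unfolding iB_def by (rule tx[OF BBd(1) Pt(3) biB])+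
  have i1: "pA (iA w) = w" for w
    by (rule T_unique[OF AAd(1) AAt(3) lin_comp[OF iAl pAl] lin_id[OF AAt(3)]]) (simp add: iAt pAt)
  have i2: "pA (iB w) = 0" for w
    by (rule T_unique[OF BBd(1) AAt(3) lin_comp[OF iBl pAl] lin_zero[OF BBt(3) AAt(3)]]) (simp add: iBt pAt tA)
  have i3: "pB (iB w) = w" for w
    by (rule T_unique[OF BBd(1) BBt(3) lin_comp[OF iBl pBl] lin_id[OF BBt(3)]]) (simp add: iBt pBt)
  have i4: "pB (iA w) = 0" for w
    by (rule T_unique[OF AAd(1) BBt(3) lin_comp[OF iAl pBl] lin_zero[OF AAt(3) BBt(3)]]) (simp add: iAt pBt tB)
  have i5: "iA (pA w) = mP (mP (tP (uA, 0) (uA, uB)) w) (tP (uA, uB) (uA, 0))" for w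
    by (rule T_unique[OF Pd(1) Pt(3) lin_comp[OF pAl iAl] lin_comp[OF mPb(8) mPb(7)]])
       (simp add: pAt iAt Pd(3) pm a(4,5) b(4,5) mb)
  have i6: "iB (pB w) = mP (mP (tP (0, uB) (uA, uB)) w) (tP (uA, uB) (0, uB))" for w
    by (rule T_unique[OF Pd(1) Pt(3) lin_comp[OF pBl iBl] lin_comp[OF mPb(8) mPb(7)]])
       (simp add: pBt iBt Pd(3) pm a(4,5) b(4,5) ma)
  have i7: "pA (mP (tP x (uA, uB)) w) = mAA (tAA (fst x) uA) (pA w)" for x w
    by (rule T_unique[OF Pd(1) AAt(3) lin_comp[OF mPb(8) pAl] lin_comp[OF pAl mAAb(8)]])
       (simp add: pAt Pd(3) pm AAd(3))
  have i8: "pA (mP w (tP (uA, uB) x)) = mAA (pA w) (tAA uA (fst x))" for x w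
    by (rule T_unique[OF Pd(1) AAt(3) lin_comp[OF mPb(7) pAl] lin_comp[OF pAl mAAb(7)]])
       (simp add: pAt Pd(3) pm AAd(3))
  have i9: "pB (mP (tP x (uA, uB)) w) = mBB (tBB (snd x) uB) (pB w)" for x w
    by (rule T_unique[OF Pd(1) BBt(3) lin_comp[OF mPb(8) pBl] lin_comp[OF pBl mBBb(8)]])
       (simp add: pBt Pd(3) pm BBd(3))
  have i10: "pB (mP w (tP (uA, uB) x)) = mBB (pB w) (tBB uB (snd x))" for x w
    by (rule T_unique[OF Pd(1) BBt(3) lin_comp[OF mPb(7) pBl] lin_comp[OF pBl mBBb(7)]])
       (simp add: pBt Pd(3) pm BBd(3))
  have i11: "iA (mAA (tAA (fst p) uA) w) = mP (tP p (uA, uB)) (iA w)" for p w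
    by (rule T_unique[OF AAd(1) Pt(3) lin_comp[OF mAAb(8) iAl] lin_comp[OF iAl mPb(8)]])
       (simp add: iAt Pd(3) pm AAd(3) mb a(4))
  have i12: "iA (mAA w (tAA uA (fst p))) = mP (iA w) (tP (uA, uB) p)" for p w
    by (rule T_unique[OF AAd(1) Pt(3) lin_comp[OF mAAb(7) iAl] lin_comp[OF iAl mPb(7)]])
       (simp add: iAt Pd(3) pm AAd(3) mb a(4))
  have i13: "iB (mBB (tBB (snd p) uB) w) = mP (tP p (uA, uB)) (iB w)" for p w
    by (rule T_unique[OF BBd(1) Pt(3) lin_comp[OF mBBb(8) iBl] lin_comp[OF iBl mPb(8)]])
       (simp add: iBt Pd(3) pm BBd(3) ma b(4))
  have i14: "iB (mBB w (tBB uB (snd p))) = mP (iB w) (tP (uA, uB) p)" for p w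
    by (rule T_unique[OF BBd(1) Pt(3) lin_comp[OF mBBb(7) iBl] lin_comp[OF iBl mPb(7)]])
       (simp add: iBt Pd(3) pm BBd(3) ma b(4))
  have FA: "\<Delta> \<in> ?EA \<longleftrightarrow> Vector_Spaces.linear sA sAA \<Delta> \<and>
     (\<forall>a b. \<Delta> (mA a b) = mAA (tAA a uA) (\<Delta> b)) \<and> (\<forall>a b. \<Delta> (mA a b) = mAA (\<Delta> a) (tAA uA b))" for \<Delta>
    by (rule frob_iff[OF a(1) AAt(3)])
  have FB: "\<Delta> \<in> ?EB \<longleftrightarrow> Vector_Spaces.linear sB sBB \<Delta> \<and>
     (\<forall>a b. \<Delta> (mB a b) = mBB (tBB a uB) (\<Delta> b)) \<and> (\<forall>a b. \<Delta> (mB a b) = mBB (\<Delta> a) (tBB uB b))" for \<Delta>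
    by (rule frob_iff[OF b(1) BBt(3)])
  have FP: "\<Delta> \<in> ?EAB \<longleftrightarrow> Vector_Spaces.linear ?sAB sP \<Delta> \<and>
     (\<forall>a b. \<Delta> (?mAB a b) = mP (tP a (uA, uB)) (\<Delta> b)) \<and> (\<forall>a b. \<Delta> (?mAB a b) = mP (\<Delta> a) (tP (uA, uB) b))" for \<Delta>
    by (rule frob_iff[OF VAB Pt(3)])
  define \<phi> where "\<phi> \<Delta> = (\<lambda>a. pA (\<Delta> (a, 0)), \<lambda>b. pB (\<Delta> (0, b)))" for \<Delta> :: "'a \<times> 'b \<Rightarrow> 'p"
  define \<psi> where "\<psi> D = (\<lambda>p. iA (fst D (fst p)) + iB (snd D (snd p)))" for D :: "('a \<Rightarrow> 'aa) \<times> ('b \<Rightarrow> 'bb)"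
  have VF: "vector_space (prod_scale (fun_scale sAA) (fun_scale sBB))"
    by (rule vs_prod[OF vs_fun[OF AAt(3)] vs_fun[OF BBt(3)]])
  have \<phi>l: "Vector_Spaces.linear (fun_scale sP) (prod_scale (fun_scale sAA) (fun_scale sBB)) \<phi>"
  proof (rule linI[OF vs_fun[OF Pt(3)] VF])
    show "\<phi> (x + y) = \<phi> x + \<phi> y" for x y
      by (simp add: \<phi>_def linD(1)[OF pAl] linD(1)[OF pBl] plus_fun_def)
    show "\<phi> (fun_scale sP c x) = prod_scale (fun_scale sAA) (fun_scale sBB) c (\<phi> x)" for c x
      by (simp add: \<phi>_def linD(2)[OF pAl] linD(2)[OF pBl] fun_scale_def prod_scale_def)
  qed
  have \<phi>E: "\<phi> \<Delta> \<in> ?EA \<times> ?EB" if D: "\<Delta> \<in> ?EAB" for \<Delta>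
  proof -
    have Dl: "Vector_Spaces.linear ?sAB sP \<Delta>" and D1: "\<And>p q. \<Delta> (?mAB p q) = mP (tP p (uA, uB)) (\<Delta> q)"
      and D2: "\<And>p q. \<Delta> (?mAB p q) = mP (\<Delta> p) (tP (uA, uB) q)" using D unfolding FP by blast+
    have e1: "(mA x y, 0) = ?mAB (x, 0) (y, 0)" for x y by (simp add: pm mb)
    have e2: "(0, mB x y) = ?mAB (0, x) (0, y)" for x y by (simp add: pm ma)
    have "(\<lambda>a. pA (\<Delta> (a, 0))) \<in> ?EA" unfolding FA
    proof (intro conjI allI)
      show "Vector_Spaces.linear sA sAA (\<lambda>a. pA (\<Delta> (a, 0)))" by (rule lin_comp[OF lin_comp[OF lin1 Dl] pAl])
      fix x y
      show "pA (\<Delta> (mA x y, 0)) = mAA (tAA x uA) (pA (\<Delta> (y, 0)))"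
        unfolding e1 D1 i7 by simp
      show "pA (\<Delta> (mA x y, 0)) = mAA (pA (\<Delta> (x, 0))) (tAA uA y)"
        unfolding e1 D2 i8 by simp
    qed
    moreover have "(\<lambda>b. pB (\<Delta> (0, b))) \<in> ?EB" unfolding FB
    proof (intro conjI allI)
      show "Vector_Spaces.linear sB sBB (\<lambda>b. pB (\<Delta> (0, b)))" by (rule lin_comp[OF lin_comp[OF lin2 Dl] pBl])
      fix x y
      show "pB (\<Delta> (0, mB x y)) = mBB (tBB x uB) (pB (\<Delta> (0, y)))"
        unfolding e2 D1 i9 by simp
      show "pB (\<Delta> (0, mB x y)) = mBB (pB (\<Delta> (0, x))) (tBB uB y)"
        unfolding e2 D2 i10 by simp
    qed
    ultimately show ?thesis unfolding \<phi>_def by simp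
  qed
  have \<psi>E: "\<psi> D \<in> ?EAB" if D: "D \<in> ?EA \<times> ?EB" for D
  proof -
    obtain D1 D2 where DD: "D = (D1, D2)" by (cases D)
    have m1: "D1 \<in> ?EA" and m2: "D2 \<in> ?EB" using D DD by auto
    have D1l: "Vector_Spaces.linear sA sAA D1" and D11: "\<And>a b. D1 (mA a b) = mAA (tAA a uA) (D1 b)"
      and D12: "\<And>a b. D1 (mA a b) = mAA (D1 a) (tAA uA b)" using m1 unfolding FA by blast+
    have D2l: "Vector_Spaces.linear sB sBB D2" and D21: "\<And>a b. D2 (mB a b) = mBB (tBB a uB) (D2 b)"
      and D22: "\<And>a b. D2 (mB a b) = mBB (D2 a) (tBB uB b)" using m2 unfolding FB by blast+
    have ps': "\<psi> D = (\<lambda>p. iA (D1 (fst p)) + iB (D2 (snd p)))" unfolding \<psi>_def DD by simp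
    show ?thesis unfolding FP ps'
    proof (intro conjI allI)
      show "Vector_Spaces.linear ?sAB sP (\<lambda>p. iA (D1 (fst p)) + iB (D2 (snd p)))"
        by (rule lin_add[OF lin_comp[OF lin_comp[OF lfst D1l] iAl] lin_comp[OF lin_comp[OF lsnd D2l] iBl]])
      fix p q
      show "iA (D1 (fst (?mAB p q))) + iB (D2 (snd (?mAB p q))) =
            mP (tP p (uA, uB)) (iA (D1 (fst q)) + iB (D2 (snd q)))"
        unfolding mPb(3) pm fst_conv snd_conv D11 D21 i11 i13 ..
      show "iA (D1 (fst (?mAB p q))) + iB (D2 (snd (?mAB p q))) =
            mP (iA (D1 (fst p)) + iB (D2 (snd p))) (tP (uA, uB) q)"
        unfolding mPb(1) pm fst_conv snd_conv D12 D22 i12 i14 ..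
    qed
  qed
  have \<psi>\<phi>: "\<psi> (\<phi> \<Delta>) = \<Delta>" if D: "\<Delta> \<in> ?EAB" for \<Delta>
  proof
    fix p :: "'a \<times> 'b"
    obtain x y where p: "p = (x, y)" by (cases p)
    have Dl: "Vector_Spaces.linear ?sAB sP \<Delta>" and D1: "\<And>p q. \<Delta> (?mAB p q) = mP (tP p (uA, uB)) (\<Delta> q)"
      and D2: "\<And>p q. \<Delta> (?mAB p q) = mP (\<Delta> p) (tP (uA, uB) q)" using D unfolding FP by blast+
    have ea: "?mAB (uA, 0) (x, 0) = (x, 0)" "?mAB (x, 0) (uA, 0) = (x, 0)" by (simp_all add: pm a(4,5) mb)
    have eb: "?mAB (0, uB) (0, y) = (0, y)" "?mAB (0, y) (0, uB) = (0, y)" by (simp_all add: pm b(4,5) ma)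
    have "iA (pA (\<Delta> (x, 0))) = \<Delta> (x, 0)"
      unfolding i5 D1[symmetric] ea D2[symmetric] ..
    moreover have "iB (pB (\<Delta> (0, y))) = \<Delta> (0, y)"
      unfolding i6 D1[symmetric] eb D2[symmetric] ..
    moreover have "\<Delta> (x, 0) + \<Delta> (0, y) = \<Delta> (x, y)" using linD(1)[OF Dl, of "(x, 0)" "(0, y)"] by simp
    ultimately show "\<psi> (\<phi> \<Delta>) p = \<Delta> p" unfolding p \<psi>_def \<phi>_def by simp
  qed
  have \<phi>\<psi>: "\<phi> (\<psi> D) = D" for D
    by (cases D) (simp add: \<phi>_def \<psi>_def linD(1)[OF pAl] linD(1)[OF pBl] i1 i2 i3 i4)
  have bij: "bij_betw \<phi> ?EAB (?EA \<times> ?EB)"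
  proof (rule bij_betw_byWitness[of _ \<psi>])
    show "\<forall>a\<in>?EAB. \<psi> (\<phi> a) = a" using \<psi>\<phi> by blast
    show "\<forall>a'\<in>?EA \<times> ?EB. \<phi> (\<psi> a') = a'" using \<phi>\<psi> by blast
    show "\<phi> ` ?EAB \<subseteq> ?EA \<times> ?EB" using \<phi>E by blast
    show "\<psi> ` (?EA \<times> ?EB) \<subseteq> ?EAB" using \<psi>E by blast
  qed
  have EABsub: "module.subspace (fun_scale sP) ?EAB" by (rule frob_sub[OF KAB P])
  have "edim (prod_scale (fun_scale sAA) (fun_scale sBB)) (\<phi> ` ?EAB) = edim (fun_scale sP) ?EAB"
    by (rule edim_iso[OF \<phi>l EABsub bij_betw_imp_inj_on[OF bij]])
  also have "\<phi> ` ?EAB = ?EA \<times> ?EB" using bij by (simp add: bij_betw_def)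
  finally have "edim (fun_scale sP) ?EAB = edim (fun_scale sAA) ?EA + edim (fun_scale sBB) ?EB"
    using edim_prod[OF vs_fun[OF AAt(3)] vs_fun[OF BBt(3)] frob_sub[OF A AA] frob_sub[OF B BB]] by simp
  thus ?thesis using bij lin_on_of_linear[OF \<phi>l] by blast
qed

lemma bil_lin: "bil s1 s2 s3 f \<Longrightarrow> Vector_Spaces.linear s3 s4 h \<Longrightarrow> bil s1 s2 s4 (\<lambda>x y. h (f x y))"
  unfolding bil_def by (auto intro: lin_comp)

lemma bil_on: "bil s1 s2 s3 f \<Longrightarrow> bilin_on s1 S1 s2 S2 s3 f"
  unfolding bil_def bilin_on_def by (auto intro: lin_on_of_linear)

lemma S_exists:
  assumes AA: "is_tensor sA sA sAA tAA" and BB: "is_tensor sB sB sBB tBB"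
    and T: "is_tensor sA sB sT tT" and TT: "is_tensor sT sT sTT tTT"
  shows "\<exists>S. is_tensor sAA sBB sTT S \<and> (\<forall>a a' b b'. S (tAA a a') (tBB b b') = tTT (tT a b) (tT a' b'))"
proof -
  note AAt = is_tensorD[OF AA] and BBt = is_tensorD[OF BB] and Tt = is_tensorD[OF T] and TTt = is_tensorD[OF TT]
  note t = bilD[OF Tt(4)] and tt = bilD[OF TTt(4)]
  obtain S where Sb: "bil sAA sBB sTT S" and St: "\<And>a a' b b'. S (tAA a a') (tBB b b') = tTT (tT a b) (tT a' b')"
    using BIEXT[OF AA BB TTt(3), of "\<lambda>a a' b b'. tTT (tT a b) (tT a' b')"]
      lin_comp[OF t(7) tt(7)] lin_comp[OF t(7) tt(8)] lin_comp[OF t(8) tt(7)] lin_comp[OF t(8) tt(8)]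
    by blast
  interpret vTT: vector_space sTT by (rule TTt(3))
  have sp: "vTT.span {S x y |x y. True} = UNIV"
  proof -
    have "tTT x y \<in> vTT.span {S x y |x y. True}" for x y
    proof -
      have "tTT x y \<in> vTT.span {tTT p q |p q. p \<in> {tT a b |a b. True} \<and> q \<in> {tT a b |a b. True}}"
        by (rule span_bil[OF TTt(4)]) (simp_all only: Tt(5) UNIV_I)
      moreover have "{tTT p q |p q. p \<in> {tT a b |a b. True} \<and> q \<in> {tT a b |a b. True}} \<subseteq> {S x y |x y. True}"
      proof
        fix v assume "v \<in> {tTT p q |p q. p \<in> {tT a b |a b. True} \<and> q \<in> {tT a b |a b. True}}"
        then obtain a b a' b' where "v = tTT (tT a b) (tT a' b')" by blast
        hence "v = S (tAA a a') (tBB b b')" by (simp add: St)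
        thus "v \<in> {S x y |x y. True}" by blast
      qed
      ultimately show ?thesis using vTT.span_mono by blast
    qed
    hence "{tTT x y |x y. True} \<subseteq> vTT.span {S x y |x y. True}" by blast
    hence "vTT.span {tTT x y |x y. True} \<subseteq> vTT.span {S x y |x y. True}"
      using vTT.span_minimal vTT.subspace_span by blast
    thus ?thesis using TTt(5) by blast
  qed
  have univ: "\<exists>h. Vector_Spaces.linear sTT (*) h \<and> (\<forall>x y. h (S x y) = \<beta> x y)"
    if beta: "bil sAA sBB (*) \<beta>" for \<beta>
  proof -
    note bb = bilD[OF beta]
    obtain \<gamma> where gb: "bil sT sT (*) \<gamma>" and gt: "\<And>a b a' b'. \<gamma> (tT a b) (tT a' b') = \<beta> (tAA a a') (tBB b b')"
      using BIEXT[OF T T vs_mult, of "\<lambda>a b a' b'. \<beta> (tAA a a') (tBB b b')"]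
        lin_comp[OF bilD(7)[OF AAt(4)] bb(7)] lin_comp[OF bilD(7)[OF BBt(4)] bb(8)]
        lin_comp[OF bilD(8)[OF AAt(4)] bb(7)] lin_comp[OF bilD(8)[OF BBt(4)] bb(8)]
      by blast
    obtain h where hl: "Vector_Spaces.linear sTT (*) h" and ht: "\<And>x y. h (tTT x y) = \<gamma> x y"
      using TTt(6)[OF gb] by blast
    have "h (S x y) = \<beta> x y" for x y
      by (rule BIEQ[OF AA BB vs_mult bil_lin[OF Sb hl] beta]) (simp add: St ht gt)
    thus ?thesis using hl by blast
  qed
  have "is_tensor sAA sBB sTT S"
    unfolding is_tensor_def is_tensor_on_def
    using AAt(3) BBt(3) TTt(3) Sb sp univ
    by (simp add: bilin_UNIV vs_mult lin_on_UNIV)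
  thus ?thesis using St by blast
qed

lemma S_mult:
  assumes AA: "tensor_alg sA mA uA sA mA uA sAA tAA mAA uAA"
    and BB: "tensor_alg sB mB uB sB mB uB sBB tBB mBB uBB"
    and T: "tensor_alg sA mA uA sB mB uB sT tT mT uT"
    and TT: "tensor_alg sT mT uT sT mT uT sTT tTT mTT uTT"
    and S: "is_tensor sAA sBB sTT S" and St: "\<And>a a' b b'. S (tAA a a') (tBB b b') = tTT (tT a b) (tT a' b')"
  shows "mTT (S p q) (S p' q') = S (mAA p p') (mBB q q')"
proof -
  note AAd = tensor_algD[OF AA] and BBd = tensor_algD[OF BB] and Td = tensor_algD[OF T] and TTd = tensor_algD[OF TT]
  note Sb = is_tensorD(4)[OF S]
  note TTt = is_tensorD[OF TTd(1)]
  note mt = bilD[OF TTd(2)] and ma = bilD[OF AAd(2)] and mb = bilD[OF BBd(2)]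
  have s1: "mTT (S p q) (S (tAA a a') (tBB b b')) = S (mAA p (tAA a a')) (mBB q (tBB b b'))" for p q a a' b b'
    by (rule BIEQ[OF AAd(1) BBd(1) TTt(3) bil_lin[OF Sb mt(7)] bil_comp[OF Sb ma(7) mb(7)]])
       (simp add: St TTd(3) Td(3) AAd(3) BBd(3))
  show ?thesis
    by (rule BIEQ[OF AAd(1) BBd(1) TTt(3) bil_lin[OF Sb mt(8)] bil_comp[OF Sb ma(8) mb(8)]])
       (simp add: s1)
qed

lemma Zint:
  fixes sA :: "'k::field \<Rightarrow> 'a::ab_group_add \<Rightarrow> 'a" and mA :: "'a \<Rightarrow> 'a \<Rightarrow> 'a" and uA :: 'a
    and sB :: "'k \<Rightarrow> 'b::ab_group_add \<Rightarrow> 'b" and mB :: "'b \<Rightarrow> 'b \<Rightarrow> 'b" and uB :: 'b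
    and sAA :: "'k \<Rightarrow> 'aa::ab_group_add \<Rightarrow> 'aa" and tAA :: "'a \<Rightarrow> 'a \<Rightarrow> 'aa"
    and mAA :: "'aa \<Rightarrow> 'aa \<Rightarrow> 'aa" and uAA :: 'aa
    and sBB :: "'k \<Rightarrow> 'bb::ab_group_add \<Rightarrow> 'bb" and tBB :: "'b \<Rightarrow> 'b \<Rightarrow> 'bb"
    and mBB :: "'bb \<Rightarrow> 'bb \<Rightarrow> 'bb" and uBB :: 'bb
    and sT :: "'k \<Rightarrow> 't::ab_group_add \<Rightarrow> 't" and tT :: "'a \<Rightarrow> 'b \<Rightarrow> 't"
    and mT :: "'t \<Rightarrow> 't \<Rightarrow> 't" and uT :: 't
    and sTT :: "'k \<Rightarrow> 'tt::ab_group_add \<Rightarrow> 'tt" and tTT :: "'t \<Rightarrow> 't \<Rightarrow> 'tt"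
    and mTT :: "'tt \<Rightarrow> 'tt \<Rightarrow> 'tt" and uTT :: 'tt
    and S :: "'aa \<Rightarrow> 'bb \<Rightarrow> 'tt"
  assumes A: "kalg sA mA uA"
    and B: "kalg sB mB uB"
    and AA: "tensor_alg sA mA uA sA mA uA sAA tAA mAA uAA"
    and BB: "tensor_alg sB mB uB sB mB uB sBB tBB mBB uBB"
    and T: "tensor_alg sA mA uA sB mB uB sT tT mT uT"
    and TT: "tensor_alg sT mT uT sT mT uT sTT tTT mTT uTT"
    and S: "is_tensor sAA sBB sTT S" and St: "\<And>a a' b b'. S (tAA a a') (tBB b b') = tTT (tT a b) (tT a' b')"
    and PA: "module.independent sAA PA" "module.span sAA PA = UNIV" "PA0 \<subseteq> PA"
       "module.span sAA PA0 = Zs tAA mAA uA"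
    and PB: "module.independent sBB PB" "module.span sBB PB = UNIV" "PB0 \<subseteq> PB"
       "module.span sBB PB0 = Zs tBB mBB uB"
    and w: "w \<in> Zs tTT mTT uT"
  shows "w \<in> module.span sTT ((\<lambda>(x,y). S x y) ` (PA0 \<times> PB0))"
proof -
  note AAd = tensor_algD[OF AA] and BBd = tensor_algD[OF BB] and Td = tensor_algD[OF T] and TTd = tensor_algD[OF TT]
  note St' = is_tensorD[OF S]
  note Sb = bilD[OF St'(4)]
  note mt = bilD[OF TTd(2)] and ma = bilD[OF AAd(2)] and mb = bilD[OF BBd(2)]
  have KBB: "kalg sBB mBB uBB" by (rule kalg_tensor[OF B B BB])
  have KAA: "kalg sAA mAA uAA" by (rule kalg_tensor[OF A A AA])
  note SM = S_mult[OF AA BB T TT S St]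
  interpret vAA: vector_space sAA by (rule St'(1))
  interpret vBB: vector_space sBB by (rule St'(2))
  interpret vTT: vector_space sTT by (rule St'(3))
  define lam where "lam p x = vAA.representation PA x p" for p x
  define mu where "mu q y = vBB.representation PB y q" for q y
  have laml: "Vector_Spaces.linear sAA (*) (lam p)" for p
    unfolding lam_def by (rule rep_lin[OF St'(1) PA(1,2)])
  have mul: "Vector_Spaces.linear sBB (*) (mu q)" for q
    unfolding mu_def by (rule rep_lin[OF St'(2) PB(1,2)])
  have bC: "bil sAA sBB sAA (\<lambda>x y. sAA (mu q y) x)" for q
    by (rule bilI[OF St'(1,2,1)])
       (simp_all add: vAA.scale_right_distrib vAA.scale_left_distrib linD(1,2)[OF mul] mult.commute)
  have bD: "bil sAA sBB sBB (\<lambda>x y. sBB (lam p x) y)" for p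
    by (rule bilI[OF St'(1,2,2)])
       (simp_all add: vBB.scale_right_distrib vBB.scale_left_distrib linD(1,2)[OF laml] mult.commute)
  define C where "C q = tx S sTT sAA (\<lambda>x y. sAA (mu q y) x)" for q
  define D where "D p = tx S sTT sBB (\<lambda>x y. sBB (lam p x) y)" for p
  have Cl: "Vector_Spaces.linear sTT sAA (C q)" and Ct: "C q (S x y) = sAA (mu q y) x" for q x y
    unfolding C_def by (rule tx[OF S St'(1) bC])+
  have Dl: "Vector_Spaces.linear sTT sBB (D p)" and Dt: "D p (S x y) = sBB (lam p x) y" for p x y
    unfolding D_def by (rule tx[OF S St'(2) bD])+
  have K1: "C q (mTT (S (tAA a uA) uBB) v) = mAA (tAA a uA) (C q v)" for q a v
    by (rule T_unique[OF S St'(1) lin_comp[OF mt(8) Cl] lin_comp[OF Cl ma(8)]])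
       (simp add: SM Ct ma(4) kalgD(4)[OF KBB])
  have K2: "C q (mTT v (S (tAA uA a) uBB)) = mAA (C q v) (tAA uA a)" for q a v
    by (rule T_unique[OF S St'(1) lin_comp[OF mt(7) Cl] lin_comp[OF Cl ma(7)]])
       (simp add: SM Ct ma(2) kalgD(5)[OF KBB])
  have K3: "D p (mTT (S uAA (tBB b uB)) v) = mBB (tBB b uB) (D p v)" for p b v
    by (rule T_unique[OF S St'(2) lin_comp[OF mt(8) Dl] lin_comp[OF Dl mb(8)]])
       (simp add: SM Dt mb(4) kalgD(4)[OF KAA])
  have K4: "D p (mTT v (S uAA (tBB uB b))) = mBB (D p v) (tBB uB b)" for p b v
    by (rule T_unique[OF S St'(2) lin_comp[OF mt(7) Dl] lin_comp[OF Dl mb(7)]])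
       (simp add: SM Dt mb(2) kalgD(5)[OF KAA])
  have wz: "mTT (tTT x uT) w = mTT w (tTT uT x)" for x using w unfolding Zs_def by blast
  have CZ: "C q w \<in> Zs tAA mAA uA" for q
  proof -
    have "mAA (tAA a uA) (C q w) = mAA (C q w) (tAA uA a)" for a
    proof -
      have e1: "tTT (tT a uB) uT = S (tAA a uA) uBB" by (simp add: St BBd(4) Td(4))
      have e2: "tTT uT (tT a uB) = S (tAA uA a) uBB" by (simp add: St BBd(4) Td(4))
      show ?thesis using wz[of "tT a uB"] unfolding e1 e2 K1[symmetric] K2[symmetric] by simp
    qed
    thus ?thesis unfolding Zs_def by blast
  qed
  have DZ: "D p w \<in> Zs tBB mBB uB" for p
  proof -
    have "mBB (tBB b uB) (D p w) = mBB (D p w) (tBB uB b)" for b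
    proof -
      have e1: "tTT (tT uA b) uT = S uAA (tBB b uB)" by (simp add: St AAd(4) Td(4))
      have e2: "tTT uT (tT uA b) = S uAA (tBB uB b)" by (simp add: St AAd(4) Td(4))
      show ?thesis using wz[of "tT uA b"] unfolding e1 e2 K3[symmetric] K4[symmetric] by simp
    qed
    thus ?thesis unfolding Zs_def by blast
  qed
  note TB = T_basis[OF S PA(1,2) PB(1,2)]
  let ?B = "(\<lambda>(x,y). S x y) ` (PA \<times> PB)"
  have Seq: "S p q = S p' q' \<longleftrightarrow> p = p' \<and> q = q'" if "p \<in> PA" "q \<in> PB" "p' \<in> PA" "q' \<in> PB" for p q p' q'
    using inj_onD[OF TB(1), of "(p,q)" "(p',q')"] that by auto
  have R: "vTT.representation ?B w (S p q) = lam p (C q w)" "vTT.representation ?B w (S p q) = mu q (D p w)"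
    if pq: "p \<in> PA" "q \<in> PB" for p q
  proof -
    have basis_val: "vTT.representation ?B v (S p q) = lam p (C q v) \<and> vTT.representation ?B v (S p q) = mu q (D p v)"
      if v: "v \<in> ?B" for v
    proof -
      obtain p' q' where pq': "p' \<in> PA" "q' \<in> PB" "v = S p' q'" using v by fastforce
      have mem: "S p q \<in> ?B" using pq by force
      have r: "vTT.representation ?B v (S p q) = (if S p q = v then 1 else 0)"
        by (rule rep_basis[OF St'(3) TB(2) mem v])
      have l: "lam p p' = (if p = p' then 1 else 0)" unfolding lam_def using rep_basis[OF St'(1) PA(1) pq(1) pq'(1)] .
      have m: "mu q q' = (if q = q' then 1 else 0)" unfolding mu_def using rep_basis[OF St'(2) PB(1) pq(2) pq'(2)] .
      have r': "vTT.representation ?B (S p' q') (S p q) = (if p = p' \<and> q = q' then 1 else 0)"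
        using r pq'(3) Seq[OF pq pq'(1,2)] by simp
      show ?thesis unfolding pq'(3) Ct Dt linD(2)[OF laml] linD(2)[OF mul] r' l m
        by auto
    qed
    show "vTT.representation ?B w (S p q) = lam p (C q w)"
      by (rule lin_eq_UNIV[OF rep_lin[OF St'(3) TB(2,3)] lin_comp[OF Cl laml] TB(3)]) (use basis_val in blast)
    show "vTT.representation ?B w (S p q) = mu q (D p w)"
      by (rule lin_eq_UNIV[OF rep_lin[OF St'(3) TB(2,3)] lin_comp[OF Dl mul] TB(3)]) (use basis_val in blast)
  qed
  have nz: "p \<in> PA0 \<and> q \<in> PB0" if pq: "p \<in> PA" "q \<in> PB" and ne: "vTT.representation ?B w (S p q) \<noteq> 0" for p q
  proof
    have "lam p (C q w) \<noteq> 0" using ne R(1)[OF pq] by simp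
    moreover have "lam p (C q w) = vAA.representation PA0 (C q w) p"
      unfolding lam_def by (rule fun_cong[OF vAA.representation_extend[OF PA(1) _ PA(3)]]) (use CZ PA(4) in auto)
    ultimately show "p \<in> PA0" using vAA.representation_ne_zero by metis
    have "mu q (D p w) \<noteq> 0" using ne R(2)[OF pq] by simp
    moreover have "mu q (D p w) = vBB.representation PB0 (D p w) q"
      unfolding mu_def by (rule fun_cong[OF vBB.representation_extend[OF PB(1) _ PB(3)]]) (use DZ PB(4) in auto)
    ultimately show "q \<in> PB0" using vBB.representation_ne_zero by metis
  qed
  have wsum: "(\<Sum>v | vTT.representation ?B w v \<noteq> 0. sTT (vTT.representation ?B w v) v) = w"
    by (rule vTT.sum_nonzero_representation_eq[OF TB(2)]) (simp add: TB(3))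
  have "sTT (vTT.representation ?B w v) v \<in> vTT.span ((\<lambda>(x,y). S x y) ` (PA0 \<times> PB0))"
    if v: "v \<in> {v. vTT.representation ?B w v \<noteq> 0}" for v
  proof -
    have ne: "vTT.representation ?B w v \<noteq> 0" using v by simp
    hence "v \<in> ?B" by (rule vTT.representation_ne_zero)
    then obtain p q where pq: "p \<in> PA" "q \<in> PB" "v = S p q" by fastforce
    have "p \<in> PA0 \<and> q \<in> PB0" using nz[OF pq(1,2)] ne pq(3) by simp
    hence "v \<in> (\<lambda>(x,y). S x y) ` (PA0 \<times> PB0)" using pq(3) by force
    thus ?thesis by (intro vTT.span_scale vTT.span_base)
  qed
  hence "(\<Sum>v | vTT.representation ?B w v \<noteq> 0. sTT (vTT.representation ?B w v) v)
     \<in> vTT.span ((\<lambda>(x,y). S x y) ` (PA0 \<times> PB0))" by (intro vTT.span_sum)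
  thus ?thesis unfolding wsum .
qed

lemma indep_pullback:
  assumes f: "Vector_Spaces.linear s1 s2 f" and ind: "module.independent s2 (f ` X)" and inj: "inj_on f X"
  shows "module.independent s1 X"
proof
  interpret vp: vector_space_pair s1 s2 using linD(3,4)[OF f] by (simp add: vector_space_pair_def)
  assume "vp.vs1.dependent X"
  then obtain a where a: "a \<in> X" "a \<in> vp.vs1.span (X - {a})" unfolding vp.vs1.dependent_def by blast
  have "f a \<in> f ` vp.vs1.span (X - {a})" using a(2) by blast
  also have "\<dots> = vp.vs2.span (f ` (X - {a}))" using vp.linear_span_image[OF f] by simp
  also have "f ` (X - {a}) = f ` X - {f a}" using inj a(1) by (auto simp: inj_on_def)
  finally have "vp.vs2.dependent (f ` X)" unfolding vp.vs2.dependent_def using a(1) by blast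
  thus False using ind by simp
qed

lemma part2:
  fixes sA :: "'k::field \<Rightarrow> 'a::ab_group_add \<Rightarrow> 'a" and mA :: "'a \<Rightarrow> 'a \<Rightarrow> 'a" and uA :: 'a
    and sB :: "'k \<Rightarrow> 'b::ab_group_add \<Rightarrow> 'b" and mB :: "'b \<Rightarrow> 'b \<Rightarrow> 'b" and uB :: 'b
    and sAA :: "'k \<Rightarrow> 'aa::ab_group_add \<Rightarrow> 'aa" and tAA :: "'a \<Rightarrow> 'a \<Rightarrow> 'aa"
    and mAA :: "'aa \<Rightarrow> 'aa \<Rightarrow> 'aa" and uAA :: 'aa
    and sBB :: "'k \<Rightarrow> 'bb::ab_group_add \<Rightarrow> 'bb" and tBB :: "'b \<Rightarrow> 'b \<Rightarrow> 'bb"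
    and mBB :: "'bb \<Rightarrow> 'bb \<Rightarrow> 'bb" and uBB :: 'bb
    and sT :: "'k \<Rightarrow> 't::ab_group_add \<Rightarrow> 't" and tT :: "'a \<Rightarrow> 'b \<Rightarrow> 't"
    and mT :: "'t \<Rightarrow> 't \<Rightarrow> 't" and uT :: 't
    and sTT :: "'k \<Rightarrow> 'tt::ab_group_add \<Rightarrow> 'tt" and tTT :: "'t \<Rightarrow> 't \<Rightarrow> 'tt"
    and mTT :: "'tt \<Rightarrow> 'tt \<Rightarrow> 'tt" and uTT :: 'tt
  assumes A: "kalg sA mA uA"
    and B: "kalg sB mB uB"
    and AA: "tensor_alg sA mA uA sA mA uA sAA tAA mAA uAA"
    and BB: "tensor_alg sB mB uB sB mB uB sBB tBB mBB uBB"
    and T: "tensor_alg sA mA uA sB mB uB sT tT mT uT"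
    and TT: "tensor_alg sT mT uT sT mT uT sTT tTT mTT uTT"
  shows "(\<exists>\<theta>. is_tensor_on (fun_scale sAA) (frob_space sA mA uA sAA tAA mAA)
                       (fun_scale sBB) (frob_space sB mB uB sBB tBB mBB)
                       (fun_scale sTT) (frob_space sT mT uT sTT tTT mTT) \<theta>)
   \<and> edim (fun_scale sTT) (frob_space sT mT uT sTT tTT mTT)
       = edim (fun_scale sAA) (frob_space sA mA uA sAA tAA mAA)
         * edim (fun_scale sBB) (frob_space sB mB uB sBB tBB mBB)"
proof -
  let ?EA = "frob_space sA mA uA sAA tAA mAA" and ?EB = "frob_space sB mB uB sBB tBB mBB"
    and ?ET = "frob_space sT mT uT sTT tTT mTT"
  let ?ZA = "Zs tAA mAA uA" and ?ZB = "Zs tBB mBB uB" and ?ZT = "Zs tTT mTT uT"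
  note AAd = tensor_algD[OF AA] and BBd = tensor_algD[OF BB] and Td = tensor_algD[OF T] and TTd = tensor_algD[OF TT]
  note AAt = is_tensorD[OF AAd(1)] and BBt = is_tensorD[OF BBd(1)] and TTt = is_tensorD[OF TTd(1)]
  note mt = bilD[OF TTd(2)] and ma = bilD[OF AAd(2)] and mb = bilD[OF BBd(2)] and tt = bilD[OF TTt(4)]
  have KT: "kalg sT mT uT" by (rule kalg_tensor[OF A B T])
  have KTT: "kalg sTT mTT uTT" by (rule kalg_tensor[OF KT KT TT])
  have KAA: "kalg sAA mAA uAA" by (rule kalg_tensor[OF A A AA])
  have KBB: "kalg sBB mBB uBB" by (rule kalg_tensor[OF B B BB])
  obtain S where S: "is_tensor sAA sBB sTT S" and St: "\<And>a a' b b'. S (tAA a a') (tBB b b') = tTT (tT a b) (tT a' b')"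
    using S_exists[OF AAd(1) BBd(1) Td(1) TTd(1)] by blast
  note SM = S_mult[OF AA BB T TT S St]
  note Sb = is_tensorD(4)[OF S]
  interpret vAA: vector_space sAA by (rule AAt(3))
  interpret vBB: vector_space sBB by (rule BBt(3))
  interpret vTT: vector_space sTT by (rule TTt(3))
  have VFA: "vector_space (fun_scale sAA)" by (rule vs_fun[OF AAt(3)])
  have VFB: "vector_space (fun_scale sBB)" by (rule vs_fun[OF BBt(3)])
  have VFT: "vector_space (fun_scale sTT)" by (rule vs_fun[OF TTt(3)])
  interpret vFA: vector_space "fun_scale sAA" by (rule VFA)
  interpret vFB: vector_space "fun_scale sBB" by (rule VFB)
  interpret vFT: vector_space "fun_scale sTT" by (rule VFT)
  interpret pM: vector_space_pair sTT "fun_scale sTT" by unfold_locales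
  define M where "M w = (\<lambda>x. mTT (tTT x uT) w)" for w
  have Ml: "Vector_Spaces.linear sTT (fun_scale sTT) M"
    by (rule linI[OF TTt(3) VFT]) (simp_all add: M_def fun_eq_iff mt fun_scale_def)
  define \<theta> where "\<theta> \<Delta> \<Gamma> = M (S (\<Delta> uA) (\<Gamma> uB))" for \<Delta> :: "'a \<Rightarrow> 'aa" and \<Gamma> :: "'b \<Rightarrow> 'bb"
  have \<theta>b: "bil (fun_scale sAA) (fun_scale sBB) (fun_scale sTT) \<theta>"
    unfolding \<theta>_def by (rule bil_lin[OF bil_comp[OF Sb lin_eval[OF AAt(3)] lin_eval[OF BBt(3)]] Ml])
  have SZ: "S z1 z2 \<in> ?ZT" if z: "z1 \<in> ?ZA" "z2 \<in> ?ZB" for z1 z2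
  proof -
    have z1: "mAA (tAA a uA) z1 = mAA z1 (tAA uA a)" for a using z(1) unfolding Zs_def by blast
    have z2: "mBB (tBB b uB) z2 = mBB z2 (tBB uB b)" for b using z(2) unfolding Zs_def by blast
    have "mTT (tTT x uT) (S z1 z2) = mTT (S z1 z2) (tTT uT x)" for x
    proof (rule T_unique[OF Td(1) TTt(3) lin_comp[OF tt(7) mt(7)] lin_comp[OF tt(8) mt(8)]])
      fix a b
      have e1: "tTT (tT a b) uT = S (tAA a uA) (tBB b uB)" by (simp add: St Td(4))
      have e2: "tTT uT (tT a b) = S (tAA uA a) (tBB uB b)" by (simp add: St Td(4))
      show "mTT (tTT (tT a b) uT) (S z1 z2) = mTT (S z1 z2) (tTT uT (tT a b))"
        unfolding e1 e2 SM z1 z2 ..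
    qed
    thus ?thesis unfolding Zs_def by blast
  qed
  have \<theta>E: "\<theta> \<Delta> \<Gamma> \<in> ?ET" if "\<Delta> \<in> ?EA" "\<Gamma> \<in> ?EB" for \<Delta> \<Gamma>
    unfolding \<theta>_def M_def
    by (rule E2[OF KT TT SZ[OF E1(2)[OF A that(1)] E1(2)[OF B that(2)]]])
  have evT: "\<theta> \<Delta> \<Gamma> uT = S (\<Delta> uA) (\<Gamma> uB)" for \<Delta> \<Gamma>
    unfolding \<theta>_def M_def TTd(4)[symmetric] by (rule kalgD(4)[OF KTT])
  have EAsub: "vFA.subspace ?EA" by (rule frob_sub[OF A AA])
  have EBsub: "vFB.subspace ?EB" by (rule frob_sub[OF B BB])
  have ETsub: "vFT.subspace ?ET" by (rule frob_sub[OF KT TT])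
  obtain DA where DA: "DA \<subseteq> ?EA" "vFA.independent DA" "vFA.span DA = ?EA" using basis_sub[OF VFA EAsub] by blast
  obtain DB where DB: "DB \<subseteq> ?EB" "vFB.independent DB" "vFB.span DB = ?EB" using basis_sub[OF VFB EBsub] by blast
  have injA: "inj_on (\<lambda>\<Delta>. \<Delta> uA) ?EA"
  proof (rule inj_onI)
    fix \<Delta> \<Delta>' assume "\<Delta> \<in> ?EA" "\<Delta>' \<in> ?EA" "\<Delta> uA = \<Delta>' uA"
    thus "\<Delta> = \<Delta>'" using E1(1)[OF A] by (metis ext)
  qed
  have injB: "inj_on (\<lambda>\<Delta>. \<Delta> uB) ?EB"
  proof (rule inj_onI)
    fix \<Delta> \<Delta>' assume "\<Delta> \<in> ?EB" "\<Delta>' \<in> ?EB" "\<Delta> uB = \<Delta>' uB"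
    thus "\<Delta> = \<Delta>'" using E1(1)[OF B] by (metis ext)
  qed
  have ZAim: "(\<lambda>\<Delta>. \<Delta> uA) ` ?EA = ?ZA"
  proof
    show "(\<lambda>\<Delta>. \<Delta> uA) ` ?EA \<subseteq> ?ZA" using E1(2)[OF A] by blast
    show "?ZA \<subseteq> (\<lambda>\<Delta>. \<Delta> uA) ` ?EA"
    proof
      fix z assume z: "z \<in> ?ZA"
      have "(\<lambda>a. mAA (tAA a uA) z) \<in> ?EA" by (rule E2[OF A AA z])
      moreover have "mAA (tAA uA uA) z = z" using kalgD(4)[OF KAA] AAd(4) by simp
      ultimately show "z \<in> (\<lambda>\<Delta>. \<Delta> uA) ` ?EA" by (intro rev_image_eqI[of "\<lambda>a. mAA (tAA a uA) z"]) simp_all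
    qed
  qed
  have ZBim: "(\<lambda>\<Delta>. \<Delta> uB) ` ?EB = ?ZB"
  proof
    show "(\<lambda>\<Delta>. \<Delta> uB) ` ?EB \<subseteq> ?ZB" using E1(2)[OF B] by blast
    show "?ZB \<subseteq> (\<lambda>\<Delta>. \<Delta> uB) ` ?EB"
    proof
      fix z assume z: "z \<in> ?ZB"
      have "(\<lambda>a. mBB (tBB a uB) z) \<in> ?EB" by (rule E2[OF B BB z])
      moreover have "mBB (tBB uB uB) z = z" using kalgD(4)[OF KBB] BBd(4) by simp
      ultimately show "z \<in> (\<lambda>\<Delta>. \<Delta> uB) ` ?EB" by (intro rev_image_eqI[of "\<lambda>a. mBB (tBB a uB) z"]) simp_all
    qed
  qed
  interpret pA: vector_space_pair "fun_scale sAA" sAA by unfold_locales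
  interpret pB: vector_space_pair "fun_scale sBB" sBB by unfold_locales
  let ?PA0 = "(\<lambda>\<Delta>. \<Delta> uA) ` DA" and ?PB0 = "(\<lambda>\<Delta>. \<Delta> uB) ` DB"
  have PA0i: "vAA.independent ?PA0"
    by (rule pA.linear_independent_injective_image[OF lin_eval[OF AAt(3)] DA(2)]) (simp only: DA(3) injA)
  have PB0i: "vBB.independent ?PB0"
    by (rule pB.linear_independent_injective_image[OF lin_eval[OF BBt(3)] DB(2)]) (simp only: DB(3) injB)
  have "vAA.span ?PA0 = (\<lambda>f. f uA) ` vFA.span DA" by (rule pA.linear_span_image[OF lin_eval[OF AAt(3)]])
  also have "\<dots> = ?ZA" unfolding DA(3) ZAim ..
  finally have PA0s: "vAA.span ?PA0 = ?ZA" .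
  have "vBB.span ?PB0 = (\<lambda>f. f uB) ` vFB.span DB" by (rule pB.linear_span_image[OF lin_eval[OF BBt(3)]])
  also have "\<dots> = ?ZB" unfolding DB(3) ZBim ..
  finally have PB0s: "vBB.span ?PB0 = ?ZB" .
  obtain PA where PA: "?PA0 \<subseteq> PA" "vAA.independent PA" "UNIV \<subseteq> vAA.span PA"
    by (rule vAA.maximal_independent_subset_extend[OF subset_UNIV PA0i])
  obtain PB where PB: "?PB0 \<subseteq> PB" "vBB.independent PB" "UNIV \<subseteq> vBB.span PB"
    by (rule vBB.maximal_independent_subset_extend[OF subset_UNIV PB0i])
  have PAs: "vAA.span PA = UNIV" by (rule top.extremum_uniqueI[OF PA(3)])
  have PBs: "vBB.span PB = UNIV" by (rule top.extremum_uniqueI[OF PB(3)])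
  note TB = T_basis[OF S PA(2) PAs PB(2) PBs]
  have key: "(\<Delta>, \<Gamma>) = (\<Delta>', \<Gamma>')" if "\<Delta> \<in> DA" "\<Gamma> \<in> DB" "\<Delta>' \<in> DA" "\<Gamma>' \<in> DB"
    "S (\<Delta> uA) (\<Gamma> uB) = S (\<Delta>' uA) (\<Gamma>' uB)" for \<Delta> \<Gamma> \<Delta>' \<Gamma>'
  proof -
    have "(\<Delta> uA, \<Gamma> uB) = (\<Delta>' uA, \<Gamma>' uB)"
      by (rule inj_onD[OF TB(1)]) (use that PA(1) PB(1) in auto)
    hence "\<Delta> uA = \<Delta>' uA" "\<Gamma> uB = \<Gamma>' uB" by auto
    hence "\<Delta> = \<Delta>'" "\<Gamma> = \<Gamma>'" using inj_onD[OF injA] inj_onD[OF injB] that DA(1) DB(1) by blast+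
    thus ?thesis by simp
  qed
  let ?I = "(\<lambda>(x,y). \<theta> x y) ` (DA \<times> DB)"
  have PP: "?PA0 \<times> ?PB0 = (\<lambda>(x,y). (x uA, y uB)) ` (DA \<times> DB)" by (rule image_paired_Times[symmetric])
  have im1: "(\<lambda>(x,y). S x y) ` (?PA0 \<times> ?PB0) = (\<lambda>(x,y). S (x uA) (y uB)) ` (DA \<times> DB)"
    unfolding PP image_image by (simp add: case_prod_beta)
  have im2: "(\<lambda>f. f uT) ` ?I = (\<lambda>(x,y). S (x uA) (y uB)) ` (DA \<times> DB)"
    unfolding image_image by (simp add: case_prod_beta evT)
  have im3: "M ` (\<lambda>(x,y). S x y) ` (?PA0 \<times> ?PB0) = ?I"
    unfolding im1 image_image by (simp add: case_prod_beta \<theta>_def)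
  have inj: "inj_on (\<lambda>(x,y). \<theta> x y) (DA \<times> DB)"
  proof (rule inj_onI, clarify)
    fix \<Delta> \<Gamma> \<Delta>' \<Gamma>' assume "\<Delta> \<in> DA" "\<Gamma> \<in> DB" "\<Delta>' \<in> DA" "\<Gamma>' \<in> DB" "\<theta> \<Delta> \<Gamma> = \<theta> \<Delta>' \<Gamma>'"
    hence "\<theta> \<Delta> \<Gamma> uT = \<theta> \<Delta>' \<Gamma>' uT" by simp
    hence "S (\<Delta> uA) (\<Gamma> uB) = S (\<Delta>' uA) (\<Gamma>' uB)" by (simp only: evT)
    from key[OF \<open>\<Delta> \<in> DA\<close> \<open>\<Gamma> \<in> DB\<close> \<open>\<Delta>' \<in> DA\<close> \<open>\<Gamma>' \<in> DB\<close> this]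
    show "\<Delta> = \<Delta>' \<and> \<Gamma> = \<Gamma>'" by simp
  qed
  have sub: "?I \<subseteq> ?ET"
  proof
    fix v assume "v \<in> ?I"
    then obtain \<Delta> \<Gamma> where v: "\<Delta> \<in> DA" "\<Gamma> \<in> DB" "v = \<theta> \<Delta> \<Gamma>" by auto
    show "v \<in> ?ET" unfolding v(3) by (rule \<theta>E[OF subsetD[OF DA(1) v(1)] subsetD[OF DB(1) v(2)]])
  qed
  have ind: "vFT.independent ?I"
  proof (rule indep_pullback[OF lin_eval[OF TTt(3)]])
    have e: "(\<lambda>f. f uT) ` ?I = (\<lambda>(x,y). S x y) ` (?PA0 \<times> ?PB0)" unfolding im1 im2 ..
    have ss: "(\<lambda>(x,y). S x y) ` (?PA0 \<times> ?PB0) \<subseteq> (\<lambda>(x,y). S x y) ` (PA \<times> PB)"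
      by (rule image_mono) (rule Sigma_mono[OF PA(1) PB(1)])
    show "vTT.independent ((\<lambda>f. f uT) ` ?I)" unfolding e by (rule vTT.independent_mono[OF TB(2) ss])
    show "inj_on (\<lambda>f. f uT) ?I"
    proof (rule inj_onI, clarify)
      fix \<Delta> \<Gamma> \<Delta>' \<Gamma>' assume "\<Delta> \<in> DA" "\<Gamma> \<in> DB" "\<Delta>' \<in> DA" "\<Gamma>' \<in> DB" "\<theta> \<Delta> \<Gamma> uT = \<theta> \<Delta>' \<Gamma>' uT"
      hence "S (\<Delta> uA) (\<Gamma> uB) = S (\<Delta>' uA) (\<Gamma>' uB)" by (simp only: evT)
      from key[OF \<open>\<Delta> \<in> DA\<close> \<open>\<Gamma> \<in> DB\<close> \<open>\<Delta>' \<in> DA\<close> \<open>\<Gamma>' \<in> DB\<close> this]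
      show "\<theta> \<Delta> \<Gamma> = \<theta> \<Delta>' \<Gamma>'" by simp
    qed
  qed
  have sp: "vFT.span ?I = ?ET"
  proof
    show "vFT.span ?I \<subseteq> ?ET" by (rule vFT.span_minimal[OF sub ETsub])
    show "?ET \<subseteq> vFT.span ?I"
    proof
      fix \<Phi> assume Ph: "\<Phi> \<in> ?ET"
      have w: "\<Phi> uT \<in> ?ZT" by (rule E1(2)[OF KT Ph])
      have "\<Phi> uT \<in> vTT.span ((\<lambda>(x,y). S x y) ` (?PA0 \<times> ?PB0))"
        by (rule Zint[OF A B AA BB T TT S St PA(2) PAs PA(1) PA0s PB(2) PBs PB(1) PB0s w])
      hence "M (\<Phi> uT) \<in> M ` vTT.span ((\<lambda>(x,y). S x y) ` (?PA0 \<times> ?PB0))" by blast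
      also have "\<dots> = vFT.span (M ` (\<lambda>(x,y). S x y) ` (?PA0 \<times> ?PB0))"
        by (rule pM.linear_span_image[OF Ml, symmetric])
      also have "M ` (\<lambda>(x,y). S x y) ` (?PA0 \<times> ?PB0) = ?I" by (rule im3)
      also have "M (\<Phi> uT) = \<Phi>" unfolding M_def by (rule ext) (rule E1(1)[OF KT Ph, symmetric])
      finally show "\<Phi> \<in> vFT.span ?I" .
    qed
  qed
  have into: "\<forall>x\<in>?EA. \<forall>y\<in>?EB. \<theta> x y \<in> ?ET" using \<theta>E by blast
  have "is_tensor_on (fun_scale sAA) ?EA (fun_scale sBB) ?EB (fun_scale sTT) ?ET \<theta>"
    by (rule mk_tensor_on[OF VFA VFB VFT DA DB into bil_on[OF \<theta>b] inj ind sp])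
  moreover have "edim (fun_scale sTT) ?ET = edim (fun_scale sAA) ?EA * edim (fun_scale sBB) ?EB"
    by (rule edim_tensor[OF VFT VFA VFB DA DB inj sub ind sp])
  ultimately show ?thesis by blast
qed

theorem proposition8:
  fixes sA :: "'k::field \<Rightarrow> 'a::ab_group_add \<Rightarrow> 'a" and mA :: "'a \<Rightarrow> 'a \<Rightarrow> 'a" and uA :: 'a
    and sB :: "'k \<Rightarrow> 'b::ab_group_add \<Rightarrow> 'b" and mB :: "'b \<Rightarrow> 'b \<Rightarrow> 'b" and uB :: 'b
    \<comment> \<open>A (x) A, B (x) B\<close>
    and sAA :: "'k \<Rightarrow> 'aa::ab_group_add \<Rightarrow> 'aa" and tAA :: "'a \<Rightarrow> 'a \<Rightarrow> 'aa"
    and mAA :: "'aa \<Rightarrow> 'aa \<Rightarrow> 'aa" and uAA :: 'aa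
    and sBB :: "'k \<Rightarrow> 'bb::ab_group_add \<Rightarrow> 'bb" and tBB :: "'b \<Rightarrow> 'b \<Rightarrow> 'bb"
    and mBB :: "'bb \<Rightarrow> 'bb \<Rightarrow> 'bb" and uBB :: 'bb
    \<comment> \<open>(A x B) (x) (A x B)\<close>
    and sP :: "'k \<Rightarrow> 'p::ab_group_add \<Rightarrow> 'p" and tP :: "'a \<times> 'b \<Rightarrow> 'a \<times> 'b \<Rightarrow> 'p"
    and mP :: "'p \<Rightarrow> 'p \<Rightarrow> 'p" and uP :: 'p
    \<comment> \<open>A (x) B and (A (x) B) (x) (A (x) B)\<close>
    and sT :: "'k \<Rightarrow> 't::ab_group_add \<Rightarrow> 't" and tT :: "'a \<Rightarrow> 'b \<Rightarrow> 't"
    and mT :: "'t \<Rightarrow> 't \<Rightarrow> 't" and uT :: 't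
    and sTT :: "'k \<Rightarrow> 'tt::ab_group_add \<Rightarrow> 'tt" and tTT :: "'t \<Rightarrow> 't \<Rightarrow> 'tt"
    and mTT :: "'tt \<Rightarrow> 'tt \<Rightarrow> 'tt" and uTT :: 'tt
  assumes A: "kalg sA mA uA"
    and B: "kalg sB mB uB"
    and AA: "tensor_alg sA mA uA sA mA uA sAA tAA mAA uAA"
    and BB: "tensor_alg sB mB uB sB mB uB sBB tBB mBB uBB"
    and P: "tensor_alg (prod_scale sA sB) (prod_mult mA mB) (uA, uB)
                       (prod_scale sA sB) (prod_mult mA mB) (uA, uB) sP tP mP uP"
    and T: "tensor_alg sA mA uA sB mB uB sT tT mT uT"
    and TT: "tensor_alg sT mT uT sT mT uT sTT tTT mTT uTT"
  shows
    "(\<exists>\<phi>. lin_on (fun_scale sP) (frob_space (prod_scale sA sB) (prod_mult mA mB) (uA, uB) sP tP mP)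
                 (prod_scale (fun_scale sAA) (fun_scale sBB)) \<phi> \<and>
          bij_betw \<phi> (frob_space (prod_scale sA sB) (prod_mult mA mB) (uA, uB) sP tP mP)
                     (frob_space sA mA uA sAA tAA mAA \<times> frob_space sB mB uB sBB tBB mBB))
   \<and> edim (fun_scale sP) (frob_space (prod_scale sA sB) (prod_mult mA mB) (uA, uB) sP tP mP)
       = edim (fun_scale sAA) (frob_space sA mA uA sAA tAA mAA)
         + edim (fun_scale sBB) (frob_space sB mB uB sBB tBB mBB)
   \<and> (\<exists>\<theta>. is_tensor_on (fun_scale sAA) (frob_space sA mA uA sAA tAA mAA)
                       (fun_scale sBB) (frob_space sB mB uB sBB tBB mBB)
                       (fun_scale sTT) (frob_space sT mT uT sTT tTT mTT) \<theta>)
   \<and> edim (fun_scale sTT) (frob_space sT mT uT sTT tTT mTT)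
       = edim (fun_scale sAA) (frob_space sA mA uA sAA tAA mAA)
         * edim (fun_scale sBB) (frob_space sB mB uB sBB tBB mBB)"
  proof -
  have p1: "(\<exists>\<phi>. lin_on (fun_scale sP) (frob_space (prod_scale sA sB) (prod_mult mA mB) (uA, uB) sP tP mP)
                 (prod_scale (fun_scale sAA) (fun_scale sBB)) \<phi> \<and>
          bij_betw \<phi> (frob_space (prod_scale sA sB) (prod_mult mA mB) (uA, uB) sP tP mP)
                     (frob_space sA mA uA sAA tAA mAA \<times> frob_space sB mB uB sBB tBB mBB))
   \<and> edim (fun_scale sP) (frob_space (prod_scale sA sB) (prod_mult mA mB) (uA, uB) sP tP mP)
       = edim (fun_scale sAA) (frob_space sA mA uA sAA tAA mAA)
         + edim (fun_scale sBB) (frob_space sB mB uB sBB tBB mBB)"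
    by (rule part1[OF A B AA BB P])
  have p2: "(\<exists>\<theta>. is_tensor_on (fun_scale sAA) (frob_space sA mA uA sAA tAA mAA)
                       (fun_scale sBB) (frob_space sB mB uB sBB tBB mBB)
                       (fun_scale sTT) (frob_space sT mT uT sTT tTT mTT) \<theta>)
   \<and> edim (fun_scale sTT) (frob_space sT mT uT sTT tTT mTT)
       = edim (fun_scale sAA) (frob_space sA mA uA sAA tAA mAA)
         * edim (fun_scale sBB) (frob_space sB mB uB sBB tBB mBB)"
    by (rule part2[OF A B AA BB T TT])
  show ?thesis using p1 p2 by (simp only: conj_assoc)
qed

end
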